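(* On $\mathcal{P}(\mathbb{R}^{2m},\mathbb{C})\cap\ker(\Delta_x,\Delta_u)$, $$[S_x,S_u]=\frac{H_x-H_u}{(1+H_x)(1+H_u)}\,CA-(H_x-H_u).$$
   Context: Fix an integer $m>4$. For $x,u\in\mathbb{R}^m$ let $\mathcal{P}(\mathbb{R}^{2m},\mathbb{C})$ be complex polynomials in $(x,u)$, $\mathcal{P}_{p,q}$ those of bidegree $(p,q)$. Write $|x|^2=\sum x_j^2$, $\langle u,x\rangle=\sum u_jx_j$, $\Delta_x=\sum\partial_{x_j}^2$, $\Delta_u=\sum\partial_{u_j}^2$, $\langle\partial_u,\partial_x\rangle=\sum\partial_{u_j}\partial_{x_j}$, $\langle x,\partial_u\rangle=\sum x_j\partial_{u_j}$, $\langle u,\partial_x\rangle=\sum u_j\partial_{x_j}$, $\mathbb{E}_x=\sum x_j\partial_{x_j}$, $\mathbb{E}_u=\sum u_j\partial_{u_j}$, $H_x=-(\mathbb{E}_x+\frac m2)$, $H_u=-(\mathbb{E}_u+\frac m2)$, $\ker(D_1,\dots,D_r)=\bigcap\ker D_i$. Every $P\in\mathcal{P}_{p,q}$ is uniquely $\sum_{a,b\ge0}|x|^{2a}|u|^{2b}H'_{p-2a,q-2b}$ with $H'_{p-2a,q-2b}\in\mathcal{P}_{p-2a,q-2b}\cap\ker(\Delta_x,\Delta_u)$; $\pi_{\mathfrak{s}}P:=H'_{p,q}$. On $\ker(\Delta_x,\Delta_u)$: $S_x=\pi_{\mathfrak{s}}\langle x,\partial_u\rangle$, $S_u=\pi_{\mathfrak{s}}\langle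 u,\partial_x\rangle$, $A=\pi_{\mathfrak{s}}\langle\partial_u,\partial_x\rangle$, $C=\pi_{\mathfrak{s}}\langle u,x\rangle$. Convention: a rational function of $H_x,H_u$ written to the left of an operator product is evaluated at the eigenvalues of $H_x,H_u$ on the bihomogeneous output of that product; the term $-(H_x-H_u)$ acts as multiplication by the corresponding eigenvalue. *)

theory Defs
  imports Complex_Main "HOL-Library.Poly_Mapping"
begin

text \<open>For a fixed m, the variable
  with index j (j < m) is x_j and the variable with index m + j (j < m) is u_j.\<close>

type_synonym cpoly = "(nat \<Rightarrow>\<^sub>0 nat) \<Rightarrow>\<^sub>0 complex"

definition var :: "nat \<Rightarrow> cpoly" where
  "var i = Poly_Mapping.single (Poly_Mapping.single i 1) 1"

definition cconst :: "complex \<Rightarrow> cpoly" where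
  "cconst c = Poly_Mapping.single 0 c"

definition pderiv_var :: "nat \<Rightarrow> cpoly \<Rightarrow> cpoly" where
  "pderiv_var i P = (\<Sum>\<alpha>\<in>Poly_Mapping.keys P. Poly_Mapping.single (\<alpha> - Poly_Mapping.single i (1::nat))
      (of_nat (Poly_Mapping.lookup \<alpha> i) * Poly_Mapping.lookup P \<alpha> :: complex))"

definition xdeg :: "nat \<Rightarrow> (nat \<Rightarrow>\<^sub>0 nat) \<Rightarrow> nat" where
  "xdeg m \<alpha> = (\<Sum>j<m. Poly_Mapping.lookup \<alpha> j)"

definition udeg :: "nat \<Rightarrow> (nat \<Rightarrow>\<^sub>0 nat) \<Rightarrow> nat" where
  "udeg m \<alpha> = (\<Sum>j<m. Poly_Mapping.lookup \<alpha> (m + j))"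

definition in_vars :: "nat \<Rightarrow> cpoly \<Rightarrow> bool" where
  "in_vars m P \<longleftrightarrow> (\<forall>\<alpha>\<in>Poly_Mapping.keys P. \<forall>i. Poly_Mapping.lookup \<alpha> i \<noteq> 0 \<longrightarrow> i < 2 * m)"

definition bihom :: "nat \<Rightarrow> nat \<Rightarrow> nat \<Rightarrow> cpoly \<Rightarrow> bool" where
  "bihom m p q P \<longleftrightarrow> (\<forall>\<alpha>\<in>Poly_Mapping.keys P. xdeg m \<alpha> = p \<and> udeg m \<alpha> = q)"

definition bicomp :: "nat \<Rightarrow> nat \<Rightarrow> nat \<Rightarrow> cpoly \<Rightarrow> cpoly" where
  "bicomp m p q P = (\<Sum>\<alpha>\<in>{\<alpha>\<in>Poly_Mapping.keys P. xdeg m \<alpha> = p \<and> udeg m \<alpha> = q}.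
      Poly_Mapping.single \<alpha> (Poly_Mapping.lookup P \<alpha>))"

definition lap_x :: "nat \<Rightarrow> cpoly \<Rightarrow> cpoly" where
  "lap_x m P = (\<Sum>j<m. pderiv_var j (pderiv_var j P))"

definition lap_u :: "nat \<Rightarrow> cpoly \<Rightarrow> cpoly" where
  "lap_u m P = (\<Sum>j<m. pderiv_var (m + j) (pderiv_var (m + j) P))"

definition normsq_x :: "nat \<Rightarrow> cpoly" where
  "normsq_x m = (\<Sum>j<m. var j * var j)"

definition normsq_u :: "nat \<Rightarrow> cpoly" where
  "normsq_u m = (\<Sum>j<m. var (m + j) * var (m + j))"

definition harm :: "nat \<Rightarrow> cpoly \<Rightarrow> bool" where
  "harm m P \<longleftrightarrow> in_vars m P \<and> lap_x m P = 0 \<and> lap_u m P = 0"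

text \<open>On P_{p,q} this is exactly the paper's definition (the components may be taken
  bihomogeneous); in general it is its linear extension over bihomogeneous components.\<close>
definition pi_s :: "nat \<Rightarrow> cpoly \<Rightarrow> cpoly" where
  "pi_s m P = (THE H. \<exists>N Hs. (\<forall>a b. harm m (Hs a b)) \<and>
      P = (\<Sum>a\<le>N. \<Sum>b\<le>N. normsq_x m ^ a * normsq_u m ^ b * Hs a b) \<and> H = Hs 0 0)"

definition x_du :: "nat \<Rightarrow> cpoly \<Rightarrow> cpoly" where
  "x_du m P = (\<Sum>j<m. var j * pderiv_var (m + j) P)"

definition u_dx :: "nat \<Rightarrow> cpoly \<Rightarrow> cpoly" where
  "u_dx m P = (\<Sum>j<m. var (m + j) * pderiv_var j P)"

definition du_dx :: "nat \<Rightarrow> cpoly \<Rightarrow> cpoly" where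
  "du_dx m P = (\<Sum>j<m. pderiv_var (m + j) (pderiv_var j P))"

definition ux :: "nat \<Rightarrow> cpoly" where
  "ux m = (\<Sum>j<m. var (m + j) * var j)"

definition S_x :: "nat \<Rightarrow> cpoly \<Rightarrow> cpoly" where "S_x m P = pi_s m (x_du m P)"
definition S_u :: "nat \<Rightarrow> cpoly \<Rightarrow> cpoly" where "S_u m P = pi_s m (u_dx m P)"
definition A_op :: "nat \<Rightarrow> cpoly \<Rightarrow> cpoly" where "A_op m P = pi_s m (du_dx m P)"
definition C_op :: "nat \<Rightarrow> cpoly \<Rightarrow> cpoly" where "C_op m P = pi_s m (ux m * P)"

text \<open>Eigenvalues of H_x = -(E_x + m/2) and H_u = -(E_u + m/2) on bidegree (p,q).\<close>
definition eig_Hx :: "nat \<Rightarrow> nat \<Rightarrow> complex" where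
  "eig_Hx m p = - (of_nat p + of_nat m / 2)"

definition eig_Hu :: "nat \<Rightarrow> nat \<Rightarrow> complex" where
  "eig_Hu m q = - (of_nat q + of_nat m / 2)"

text \<open>Apply f(H_x,H_u), given as function of the bidegree, by acting on each
  bihomogeneous component by the corresponding eigenvalue.\<close>
definition eig_apply :: "nat \<Rightarrow> (nat \<Rightarrow> nat \<Rightarrow> complex) \<Rightarrow> cpoly \<Rightarrow> cpoly" where
  "eig_apply m f P = (\<Sum>(p, q)\<in>(\<lambda>\<alpha>. (xdeg m \<alpha>, udeg m \<alpha>)) ` Poly_Mapping.keys P.
      cconst (f p q) * bicomp m p q P)"

end

theory Submission
  imports Defs
begin


abbreviation lk where "lk \<equiv> Poly_Mapping.lookup"
definition ee :: "nat \<Rightarrow> nat \<Rightarrow>\<^sub>0 nat" where "ee i = Poly_Mapping.single i 1"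

lemma lk_single: "lk (Poly_Mapping.single i n) j = (if i = j then n else 0)"
  by (simp add: Poly_Mapping.lookup_single when_def)

lemma lk_ee: "lk (ee i) j = (if i = j then 1 else 0)"
  unfolding ee_def
  by (simp add: Poly_Mapping.lookup_single when_def)

lemma eq_ee_plus: "(\<beta> = ee i + q) \<longleftrightarrow> (0 < lk \<beta> i \<and> q = \<beta> - ee i)"
proof
  assume h: "\<beta> = ee i + q"
  show "0 < lk \<beta> i \<and> q = \<beta> - ee i"
    using h by (auto intro!: poly_mapping_eqI simp: lookup_add lookup_minus lk_ee)
next
  assume h: "0 < lk \<beta> i \<and> q = \<beta> - ee i"
  show "\<beta> = ee i + q"
    using h by (auto intro!: poly_mapping_eqI simp: lookup_add lookup_minus lk_ee)
qed

lemma lookup_var_mult: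
  "lk (var i * P) \<beta> = (if 0 < lk \<beta> i then lk P (\<beta> - ee i) else 0)"
proof -
  have h: "\<And>X::_\<Rightarrow>complex. (\<lambda>a. (1 when ee i = a) * X a) = (\<lambda>a. if ee i = a then X a else 0)"
    by (auto simp: when_def fun_eq_iff)
  have "lk (var i * P) \<beta> = (\<Sum>l. (1 when ee i = l) * (\<Sum>q. lk P q when \<beta> = l + q))"
    unfolding var_def lookup_mult Poly_Mapping.lookup_single ee_def by simp
  also have "\<dots> = (\<Sum>q. lk P q when \<beta> = ee i + q)"
    by (simp only: h) simp
  also have "\<dots> = (\<Sum>q. lk P q when (0 < lk \<beta> i \<and> q = \<beta> - ee i))"
    by (simp only: eq_ee_plus)
  also have "\<dots> = (if 0 < lk \<beta> i then lk P (\<beta> - ee i) else 0)"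
    by (cases "0 < lk \<beta> i") (simp_all add: when_def)
  finally show ?thesis .
qed

lemma lookup_pderiv:
  "lk (pderiv_var i P) \<beta> = of_nat (lk \<beta> i + 1) * lk P (\<beta> + ee i)"
proof -
  have "lk (pderiv_var i P) \<beta> = (\<Sum>\<alpha>\<in>Poly_Mapping.keys P.
      (of_nat (lk \<alpha> i) * lk P \<alpha> when \<alpha> - ee i = \<beta>))"
    unfolding pderiv_var_def lookup_sum ee_def by (simp add: Poly_Mapping.lookup_single)
  also have "\<dots> = (\<Sum>\<alpha>\<in>Poly_Mapping.keys P.
      (of_nat (lk \<alpha> i) * lk P \<alpha> when \<alpha> = \<beta> + ee i))"
  proof (rule sum.cong[OF refl])
    fix \<alpha> assume "\<alpha> \<in> Poly_Mapping.keys P"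
    show "(of_nat (lk \<alpha> i) * lk P \<alpha> when \<alpha> - ee i = \<beta>) = (of_nat (lk \<alpha> i) * lk P \<alpha> when \<alpha> = \<beta> + ee i)"
    proof (cases "lk \<alpha> i = 0")
      case True
      then have "\<alpha> \<noteq> \<beta> + ee i" by (auto simp: lookup_add lk_ee)
      then show ?thesis using True by simp
    next
      case False
      have "(\<alpha> - ee i = \<beta>) \<longleftrightarrow> (\<alpha> = \<beta> + ee i)"
        using False by (auto simp: poly_mapping_eq_iff fun_eq_iff lookup_add lookup_minus lk_ee)
      then show ?thesis by simp
    qed
  qed
  also have "\<dots> = of_nat (lk \<beta> i + 1) * lk P (\<beta> + ee i)"
    by (cases "\<beta> + ee i \<in> Poly_Mapping.keys P")
       (auto simp: when_def lookup_add lk_ee in_keys_iff sum.delta)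
  finally show ?thesis .
qed


definition scl :: "((nat \<Rightarrow>\<^sub>0 nat) \<Rightarrow> complex) \<Rightarrow> cpoly \<Rightarrow> cpoly" where
  "scl w P = Poly_Mapping.mapp (\<lambda>\<alpha> c. w \<alpha> * c) P"

lemma lookup_scl: "lk (scl w P) \<beta> = w \<beta> * lk P \<beta>"
  by (auto simp: scl_def Poly_Mapping.lookup_mapp when_def in_keys_iff)

lemma lookup_cconst_mult: "lk (cconst c * P) \<beta> = c * lk P \<beta>"
proof -
  have h: "\<And>X::_\<Rightarrow>complex. (\<lambda>a. (c when 0 = a) * X a) = (\<lambda>a. if 0 = a then c * X a else 0)"
    by (auto simp: when_def fun_eq_iff)
  have "lk (cconst c * P) \<beta> = (\<Sum>l. (c when 0 = l) * (\<Sum>q. lk P q when \<beta> = l + q))"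
    unfolding cconst_def lookup_mult Poly_Mapping.lookup_single by simp
  also have "\<dots> = c * lk P \<beta>"
    by (simp only: h) (simp add: when_def)
  finally show ?thesis .
qed

lemma scl_const: "scl (\<lambda>_. c) P = cconst c * P"
  by (rule poly_mapping_eqI) (simp add: lookup_scl lookup_cconst_mult)

lemma numeral_mult_scl: "(numeral n :: cpoly) * P = scl (\<lambda>_. numeral n) P"
  by (simp add: scl_const cconst_def)

lemma scl_one: "scl (\<lambda>_. 1) P = P"
  by (rule poly_mapping_eqI) (simp add: lookup_scl)

lemma scl_scl: "scl w (scl v P) = scl (\<lambda>\<beta>. w \<beta> * v \<beta>) P"
  by (rule poly_mapping_eqI) (simp add: lookup_scl)

lemma scl_add: "scl w (P + Q) = scl w P + scl w Q"
  by (rule poly_mapping_eqI) (simp add: lookup_scl lookup_add algebra_simps)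

lemma scl_diff: "scl w (P - Q) = scl w P - scl w Q"
  by (rule poly_mapping_eqI) (simp add: lookup_scl lookup_minus algebra_simps)

lemma scl_zero[simp]: "scl w 0 = 0"
  by (rule poly_mapping_eqI) (simp add: lookup_scl)

lemma scl_sum: "scl w (\<Sum>j\<in>J. f j) = (\<Sum>j\<in>J. scl w (f j))"
  by (induction J rule: infinite_finite_induct) (auto simp: scl_add)

lemma scl_add_fun: "scl w P + scl v P = scl (\<lambda>\<beta>. w \<beta> + v \<beta>) P"
  by (rule poly_mapping_eqI) (simp add: lookup_scl lookup_add algebra_simps)

lemma scl_diff_fun: "scl w P - scl v P = scl (\<lambda>\<beta>. w \<beta> - v \<beta>) P"
  by (rule poly_mapping_eqI) (simp add: lookup_scl lookup_minus algebra_simps)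

lemma scl_sum_fun: "(\<Sum>j\<in>J. scl (w j) P) = scl (\<lambda>\<beta>. \<Sum>j\<in>J. w j \<beta>) P"
  by (rule poly_mapping_eqI) (simp add: lookup_scl lookup_sum sum_distrib_right)

lemma scl_cong: "(\<And>\<beta>. lk P \<beta> \<noteq> 0 \<Longrightarrow> w \<beta> = v \<beta>) \<Longrightarrow> scl w P = scl v P"
  by (rule poly_mapping_eqI) (metis lookup_scl mult_zero_right)

lemma pderiv_add: "pderiv_var i (P + Q) = pderiv_var i P + pderiv_var i Q"
  by (rule poly_mapping_eqI) (simp add: lookup_pderiv lookup_add algebra_simps)

lemma pderiv_diff: "pderiv_var i (P - Q) = pderiv_var i P - pderiv_var i Q"
  by (rule poly_mapping_eqI) (simp add: lookup_pderiv lookup_minus algebra_simps)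

lemma pderiv_zero[simp]: "pderiv_var i 0 = 0"
  by (rule poly_mapping_eqI) (simp add: lookup_pderiv)

lemma pderiv_sum: "pderiv_var i (\<Sum>j\<in>J. f j) = (\<Sum>j\<in>J. pderiv_var i (f j))"
  by (induction J rule: infinite_finite_induct) (auto simp: pderiv_add)

lemma pderiv_var_mult:
  "pderiv_var i (var j * P) = (if i = j then P else 0) + var j * pderiv_var i P"
proof (rule poly_mapping_eqI)
  fix \<beta>
  show "lk (pderiv_var i (var j * P)) \<beta> = lk ((if i = j then P else 0) + var j * pderiv_var i P) \<beta>"
  proof (cases "i = j")
    case True
    have e1: "\<beta> + ee i - ee i = \<beta>"
      by (auto simp: poly_mapping_eq_iff fun_eq_iff lookup_add lookup_minus lk_ee)
    have e2: "0 < lk \<beta> i \<Longrightarrow> \<beta> - ee i + ee i = \<beta>"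
      by (auto simp: poly_mapping_eq_iff fun_eq_iff lookup_add lookup_minus lk_ee)
    have l: "lk (pderiv_var i (var j * P)) \<beta> = of_nat (lk \<beta> i + 1) * lk P \<beta>"
      using True by (simp only: lookup_pderiv lookup_var_mult e1) (simp add: lookup_add lk_ee)
    have r: "lk (var j * pderiv_var i P) \<beta> = of_nat (lk \<beta> i) * lk P \<beta>"
    proof (cases "lk \<beta> i")
      case 0 then show ?thesis using True by (simp add: lookup_var_mult)
    next
      case (Suc k)
      then have "\<beta> - ee i + ee i = \<beta>" by (intro e2) simp
      then show ?thesis using True Suc by (simp add: lookup_var_mult lookup_pderiv lookup_minus lk_ee)
    qed
    show ?thesis by (simp only: l r lookup_add if_P[OF True]) (simp add: algebra_simps)
  next
    case False
    have e: "0 < lk \<beta> j \<Longrightarrow> \<beta> + ee i - ee j = \<beta> - ee j + ee i"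
      using False by (auto simp: poly_mapping_eq_iff fun_eq_iff lookup_add lookup_minus lk_ee)
    show ?thesis using False
      by (auto simp: lookup_pderiv lookup_var_mult lookup_add lk_ee e lookup_minus)
  qed
qed

lemma pderiv_comm: "pderiv_var i (pderiv_var j P) = pderiv_var j (pderiv_var i P)"
  by (rule poly_mapping_eqI) (simp add: lookup_pderiv lookup_add lk_ee algebra_simps add.assoc add.left_commute)

lemma pderiv_scl: "pderiv_var i (scl w P) = scl (\<lambda>\<beta>. w (\<beta> + ee i)) (pderiv_var i P)"
  by (rule poly_mapping_eqI) (simp add: lookup_pderiv lookup_scl algebra_simps)

lemma var_scl:
  assumes "\<And>\<beta>. 0 < lk \<beta> i \<Longrightarrow> w' \<beta> = w (\<beta> - ee i)"
  shows "var i * scl w P = scl w' (var i * P)"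
  by (rule poly_mapping_eqI) (simp add: lookup_var_mult lookup_scl assms)

lemma euler1: "var i * pderiv_var i P = scl (\<lambda>\<beta>. of_nat (lk \<beta> i)) P"
proof (rule poly_mapping_eqI)
  fix \<beta>
  show "lk (var i * pderiv_var i P) \<beta> = lk (scl (\<lambda>\<beta>. of_nat (lk \<beta> i)) P) \<beta>"
  proof (cases "lk \<beta> i")
    case 0 then show ?thesis by (simp add: lookup_var_mult lookup_scl)
  next
    case (Suc k)
    have "\<beta> - ee i + ee i = \<beta>" using Suc
      by (auto simp: poly_mapping_eq_iff fun_eq_iff lookup_add lookup_minus lk_ee)
    then show ?thesis using Suc by (simp add: lookup_var_mult lookup_scl lookup_pderiv lookup_minus lk_ee)
  qed
qed

lemma var_mult_zero[simp]: "var i * 0 = 0" by simp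


definition lapb :: "nat \<Rightarrow> nat \<Rightarrow> cpoly \<Rightarrow> cpoly" where
  "lapb m b P = (\<Sum>j<m. pderiv_var (b + j) (pderiv_var (b + j) P))"
definition nsqb :: "nat \<Rightarrow> nat \<Rightarrow> cpoly" where
  "nsqb m b = (\<Sum>j<m. var (b + j) * var (b + j))"
definition degb :: "nat \<Rightarrow> nat \<Rightarrow> (nat \<Rightarrow>\<^sub>0 nat) \<Rightarrow> nat" where
  "degb m b \<alpha> = (\<Sum>j<m. lk \<alpha> (b + j))"
abbreviation inb :: "nat \<Rightarrow> nat \<Rightarrow> nat \<Rightarrow> bool" where
  "inb m b i \<equiv> b \<le> i \<and> i < b + m"

lemma lap_x_eq: "lap_x m = lapb m 0" by (simp add: fun_eq_iff lap_x_def lapb_def)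
lemma lap_u_eq: "lap_u m = lapb m m" by (simp add: fun_eq_iff lap_u_def lapb_def)
lemma normsq_x_eq: "normsq_x m = nsqb m 0" by (simp add: normsq_x_def nsqb_def)
lemma normsq_u_eq: "normsq_u m = nsqb m m" by (simp add: normsq_u_def nsqb_def)
lemma xdeg_eq: "xdeg m = degb m 0" by (simp add: fun_eq_iff xdeg_def degb_def)
lemma udeg_eq: "udeg m = degb m m" by (simp add: fun_eq_iff udeg_def degb_def)

lemma sum_if_block: "(\<Sum>j<m. if i = b + j then c else 0) = (if inb m b i then c else 0)"
proof (cases "inb m b i")
  case True
  then have "(\<Sum>j<m. if i = b + j then c else 0) = (\<Sum>j<m. if j = i - b then c else 0)"
    by (intro sum.cong) auto
  also have "\<dots> = c" using True by (simp add: sum.delta; linarith)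
  finally show ?thesis using True by simp
next
  case False
  then show ?thesis by (auto intro!: sum.neutral)
qed

lemma degb_plus: "degb m b (\<beta> + ee i) = degb m b \<beta> + (if inb m b i then 1 else 0)"
proof -
  have "degb m b (\<beta> + ee i) = degb m b \<beta> + (\<Sum>j<m. if i = b + j then 1 else 0)"
    by (simp add: degb_def lookup_add lk_ee sum.distrib)
  then show ?thesis by (simp add: sum_if_block)
qed

lemma degb_minus: "0 < lk \<beta> i \<Longrightarrow> degb m b (\<beta> - ee i) = degb m b \<beta> - (if inb m b i then 1 else 0)"
proof -
  assume h: "0 < lk \<beta> i"
  have "\<beta> = (\<beta> - ee i) + ee i" using h
    by (auto simp: poly_mapping_eq_iff fun_eq_iff lookup_add lookup_minus lk_ee)
  then have "degb m b \<beta> = degb m b (\<beta> - ee i) + (if inb m b i then 1 else 0)"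
    by (metis degb_plus)
  then show ?thesis by simp
qed

lemma var_scl2: "var i * scl (\<lambda>\<beta>. w (\<beta> + ee i)) X = scl w (var i * X)"
proof (rule var_scl)
  fix \<beta> :: "nat \<Rightarrow>\<^sub>0 nat" assume "0 < lk \<beta> i"
  then have "\<beta> - ee i + ee i = \<beta>"
    by (auto simp: poly_mapping_eq_iff fun_eq_iff lookup_add lookup_minus lk_ee)
  then show "w \<beta> = w (\<beta> - ee i + ee i)" by simp
qed

lemma nsqb_mult: "nsqb m b * X = (\<Sum>j<m. var (b + j) * (var (b + j) * X))"
  by (simp add: nsqb_def sum_distrib_right mult.assoc)

lemma pderiv_vv: "pderiv_var i (var a * (var a * X)) =
   (if i = a then var a * X + var a * X else 0) + var a * (var a * pderiv_var i X)"
proof -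
  have h: "pderiv_var i (var a * (var a * X)) = (if i = a then var a * X else 0) + var a * ((if i = a then X else 0) + var a * pderiv_var i X)"
    by (simp only: pderiv_var_mult)
  show ?thesis
  proof (cases "i = a")
    case True
    then show ?thesis using h by (simp only: if_P[OF refl] distrib_left add.assoc)
  qed (use h in simp)
qed

lemma pderiv_nsqb:
  "pderiv_var i (nsqb m b * X) = (if inb m b i then var i * X + var i * X else 0) + nsqb m b * pderiv_var i X"
proof -
  have "pderiv_var i (nsqb m b * X) = (\<Sum>j<m. (if i = b + j then var i * X + var i * X else 0))
      + (\<Sum>j<m. var (b + j) * (var (b + j) * pderiv_var i X))"
    unfolding nsqb_mult pderiv_sum pderiv_vv sum.distrib
    by (intro arg_cong2[where f="(+)"] sum.cong) auto
  then show ?thesis by (simp only: sum_if_block nsqb_mult)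
qed

lemma pderiv_nsqb_out: "\<not> inb m b i \<Longrightarrow> pderiv_var i (nsqb m b * X) = nsqb m b * pderiv_var i X"
  by (simp only: pderiv_nsqb if_False add_0)

lemma euler_block: "(\<Sum>j<m. var (b + j) * pderiv_var (b + j) X) = scl (\<lambda>\<beta>. of_nat (degb m b \<beta>)) X"
  by (simp add: euler1 scl_sum_fun degb_def)

lemma lapb_nsqb:
  "lapb m b (nsqb m b * X) = nsqb m b * lapb m b X + scl (\<lambda>\<beta>. of_nat (2 * m + 4 * degb m b \<beta>)) X"
proof -
  have "\<And>j. j < m \<Longrightarrow> pderiv_var (b + j) (pderiv_var (b + j) (nsqb m b * X)) =
     scl (\<lambda>_. 2) X + scl (\<lambda>_. 4) (var (b + j) * pderiv_var (b + j) X) + nsqb m b * pderiv_var (b + j) (pderiv_var (b + j) X)"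
  proof -
    fix j assume "j < m"
    then have ib: "inb m b (b + j)" by simp
    have "pderiv_var (b + j) (pderiv_var (b + j) (nsqb m b * X)) =
       (X + var (b+j) * pderiv_var (b+j) X) + (X + var (b+j) * pderiv_var (b+j) X) + (var (b+j) * pderiv_var (b + j) X + var (b+j) * pderiv_var (b + j) X
         + nsqb m b * pderiv_var (b + j) (pderiv_var (b + j) X))"
      by (simp only: pderiv_nsqb if_P[OF ib] pderiv_add pderiv_var_mult if_P[OF refl])
    also have "\<dots> = scl (\<lambda>_. 2) X + scl (\<lambda>_. 4) (var (b + j) * pderiv_var (b + j) X) + nsqb m b * pderiv_var (b + j) (pderiv_var (b + j) X)"
      by (rule poly_mapping_eqI) (simp only: lookup_add lookup_scl, simp add: algebra_simps)
    finally show "?thesis j" .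
  qed
  then have "lapb m b (nsqb m b * X) = (\<Sum>j<m. scl (\<lambda>_. 2) X) + scl (\<lambda>_. 4) (\<Sum>j<m. var (b + j) * pderiv_var (b + j) X)
       + nsqb m b * lapb m b X"
    unfolding lapb_def by (simp add: sum.distrib sum_distrib_left scl_sum)
  also have "\<dots> = nsqb m b * lapb m b X + scl (\<lambda>\<beta>. of_nat (2 * m + 4 * degb m b \<beta>)) X"
    by (simp only: euler_block scl_sum_fun scl_scl) (rule poly_mapping_eqI, simp only: lookup_add lookup_scl, simp add: algebra_simps)
  finally show ?thesis .
qed


lemma lapb_add: "lapb m b (P + Q) = lapb m b P + lapb m b Q"
  by (simp add: lapb_def pderiv_add sum.distrib)
lemma lapb_diff: "lapb m b (P - Q) = lapb m b P - lapb m b Q"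
  by (simp add: lapb_def pderiv_diff sum_subtractf)
lemma lapb_zero[simp]: "lapb m b 0 = 0"
  by (simp add: lapb_def)
lemma lapb_sum: "lapb m b (\<Sum>j\<in>J. f j) = (\<Sum>j\<in>J. lapb m b (f j))"
  by (induction J rule: infinite_finite_induct) (auto simp: lapb_add)
lemma lapb_scl_gen: "lapb m b (scl w P) = (\<Sum>j<m. scl (\<lambda>\<beta>. w (\<beta> + ee (b + j) + ee (b + j))) (pderiv_var (b + j) (pderiv_var (b + j) P)))"
  by (simp add: lapb_def pderiv_scl add.assoc)

lemma pderiv_lapb: "pderiv_var i (lapb m b X) = lapb m b (pderiv_var i X)"
  by (simp add: lapb_def pderiv_sum pderiv_comm)

lemma lapb_comm: "lapb m c (lapb m b X) = lapb m b (lapb m c X)"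
  unfolding lapb_def[of m c] by (simp add: pderiv_lapb lapb_sum[symmetric])

lemma pderiv_scl_deg:
  "pderiv_var i (scl (\<lambda>\<beta>. F (degb m 0 \<beta>) (degb m m \<beta>)) X) =
   scl (\<lambda>\<beta>. F (degb m 0 \<beta> + (if inb m 0 i then 1 else 0)) (degb m m \<beta> + (if inb m m i then 1 else 0))) (pderiv_var i X)"
  by (simp add: pderiv_scl degb_plus)

lemma var_scl_deg:
  "var i * scl (\<lambda>\<beta>. F (degb m 0 \<beta> + (if inb m 0 i then 1 else 0)) (degb m m \<beta> + (if inb m m i then 1 else 0))) X =
   scl (\<lambda>\<beta>. F (degb m 0 \<beta>) (degb m m \<beta>)) (var i * X)"
  using var_scl2[of i "\<lambda>\<beta>. F (degb m 0 \<beta>) (degb m m \<beta>)" X] by (simp add: degb_plus)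

lemma pderiv_scl_deg1:
  "pderiv_var i (scl (\<lambda>\<beta>. f (degb m b \<beta>)) X) =
   scl (\<lambda>\<beta>. f (degb m b \<beta> + (if inb m b i then 1 else 0))) (pderiv_var i X)"
  by (simp add: pderiv_scl degb_plus)

lemma var_scl_deg1:
  "var i * scl (\<lambda>\<beta>. f (degb m b \<beta> + (if inb m b i then 1 else 0))) X =
   scl (\<lambda>\<beta>. f (degb m b \<beta>)) (var i * X)"
  using var_scl2[of i "\<lambda>\<beta>. f (degb m b \<beta>)" X] by (simp add: degb_plus)

lemma lapb_scl_own:
  "lapb m b (scl (\<lambda>\<beta>. f (degb m b \<beta>)) X) = scl (\<lambda>\<beta>. f (degb m b \<beta> + 2)) (lapb m b X)"
proof -
  have "\<And>j. j < m \<Longrightarrow> pderiv_var (b + j) (pderiv_var (b + j) (scl (\<lambda>\<beta>. f (degb m b \<beta>)) X)) =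
     scl (\<lambda>\<beta>. f (degb m b \<beta> + 2)) (pderiv_var (b + j) (pderiv_var (b + j) X))"
    using pderiv_scl_deg1[of "b + _" f m b X] pderiv_scl_deg1[of "b + _" "\<lambda>d. f (d + 1)" m b "pderiv_var (b + _) X"]
    by (simp add: add.assoc)
  then show ?thesis by (simp add: lapb_def scl_sum)
qed

lemma lapb_scl_other:
  assumes "\<forall>j<m. \<not> inb m b (c + j)"
  shows "lapb m c (scl (\<lambda>\<beta>. f (degb m b \<beta>)) X) = scl (\<lambda>\<beta>. f (degb m b \<beta>)) (lapb m c X)"
proof -
  have "\<And>j. j < m \<Longrightarrow> pderiv_var (c + j) (pderiv_var (c + j) (scl (\<lambda>\<beta>. f (degb m b \<beta>)) X)) =
     scl (\<lambda>\<beta>. f (degb m b \<beta>)) (pderiv_var (c + j) (pderiv_var (c + j) X))"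
  proof -
    fix j assume "j < m"
    then have n: "\<not> inb m b (c + j)" using assms by blast
    show "?thesis j" using pderiv_scl_deg1[of "c + j" f m b X] pderiv_scl_deg1[of "c + j" f m b "pderiv_var (c + j) X"] n
      by (simp only: if_False add_0_right)
  qed
  then show ?thesis by (simp add: lapb_def scl_sum)
qed

lemma scl_nsqb_own:
  "scl (\<lambda>\<beta>. f (degb m b \<beta>)) (nsqb m b * X) = nsqb m b * scl (\<lambda>\<beta>. f (degb m b \<beta> + 2)) X"
proof -
  have "\<And>j. j < m \<Longrightarrow> var (b + j) * (var (b + j) * scl (\<lambda>\<beta>. f (degb m b \<beta> + 2)) X) =
         scl (\<lambda>\<beta>. f (degb m b \<beta>)) (var (b + j) * (var (b + j) * X))"
  proof -
    fix j assume j: "j < m"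
    have "var (b + j) * scl (\<lambda>\<beta>. f (degb m b \<beta> + 2)) X = var (b + j) * scl (\<lambda>\<beta>. (\<lambda>d. f (d + 1)) (degb m b \<beta> + (if inb m b (b + j) then 1 else 0))) X"
      using j by simp
    also have "\<dots> = scl (\<lambda>\<beta>. f (degb m b \<beta> + 1)) (var (b + j) * X)"
      by (rule var_scl_deg1)
    finally have 1: "var (b + j) * scl (\<lambda>\<beta>. f (degb m b \<beta> + 2)) X = scl (\<lambda>\<beta>. f (degb m b \<beta> + 1)) (var (b + j) * X)" .
    have "var (b + j) * scl (\<lambda>\<beta>. f (degb m b \<beta> + 1)) (var (b + j) * X) = var (b + j) * scl (\<lambda>\<beta>. f (degb m b \<beta> + (if inb m b (b + j) then 1 else 0))) (var (b + j) * X)"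
      using j by simp
    also have "\<dots> = scl (\<lambda>\<beta>. f (degb m b \<beta>)) (var (b + j) * (var (b + j) * X))"
      by (rule var_scl_deg1)
    finally show "?thesis j" using 1 by simp
  qed
  then show ?thesis by (simp add: nsqb_mult sum_distrib_left scl_sum)
qed

lemma scl_nsqb_other:
  assumes "\<forall>j<m. \<not> inb m b (c + j)"
  shows "scl (\<lambda>\<beta>. f (degb m b \<beta>)) (nsqb m c * X) = nsqb m c * scl (\<lambda>\<beta>. f (degb m b \<beta>)) X"
proof -
  have "\<And>j. j < m \<Longrightarrow> var (c + j) * (var (c + j) * scl (\<lambda>\<beta>. f (degb m b \<beta>)) X) =
         scl (\<lambda>\<beta>. f (degb m b \<beta>)) (var (c + j) * (var (c + j) * X))"
  proof -
    fix j assume "j < m"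
    then have n: "\<not> inb m b (c + j)" using assms by blast
    show "?thesis j" using var_scl_deg1[of "c + j" f m b X] var_scl_deg1[of "c + j" f m b "var (c + j) * X"] n
      by (simp only: if_False add_0_right)
  qed
  then show ?thesis by (simp add: nsqb_mult sum_distrib_left scl_sum)
qed

lemma scl_nsqb_pow:
  "scl (\<lambda>\<beta>. f (degb m b \<beta>)) (nsqb m b ^ k * X) = nsqb m b ^ k * scl (\<lambda>\<beta>. f (degb m b \<beta> + 2 * k)) X"
proof (induction k arbitrary: f)
  case 0 then show ?case by simp
next
  case (Suc k)
  have "scl (\<lambda>\<beta>. f (degb m b \<beta>)) (nsqb m b ^ Suc k * X) = scl (\<lambda>\<beta>. f (degb m b \<beta>)) (nsqb m b * (nsqb m b ^ k * X))"
    by (simp add: mult.assoc)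
  also have "\<dots> = nsqb m b * scl (\<lambda>\<beta>. f (degb m b \<beta> + 2)) (nsqb m b ^ k * X)"
    by (rule scl_nsqb_own)
  also have "\<dots> = nsqb m b * (nsqb m b ^ k * scl (\<lambda>\<beta>. f (degb m b \<beta> + 2 * k + 2)) X)"
    using Suc[of "\<lambda>d. f (d + 2)"] by simp
  finally show ?case by (simp add: mult.assoc add.commute add.left_commute)
qed

lemma lapb_nsqb_other:
  assumes "\<forall>j<m. \<not> inb m b (c + j)"
  shows "lapb m c (nsqb m b * X) = nsqb m b * lapb m c X"
  using assms by (simp add: lapb_def pderiv_nsqb_out sum_distrib_left)

lemma lapb_nsqb_pow_other:
  assumes "\<forall>j<m. \<not> inb m b (c + j)"
  shows "lapb m c (nsqb m b ^ k * X) = nsqb m b ^ k * lapb m c X"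
  by (induction k) (simp_all add: mult.assoc lapb_nsqb_other[OF assms])

lemma lapb_nsqb_pow:
  assumes "lapb m b H = 0"
  shows "lapb m b (nsqb m b ^ Suc k * H) =
     nsqb m b ^ k * scl (\<lambda>\<beta>. of_nat (2 * (k + 1) * (2 * degb m b \<beta> + 2 * k + m))) H"
proof (induction k)
  case 0
  show ?case using lapb_nsqb[of m b H] assms
    by simp (rule scl_cong, simp add: algebra_simps)
next
  case (Suc k)
  have "lapb m b (nsqb m b ^ Suc (Suc k) * H) = lapb m b (nsqb m b * (nsqb m b ^ Suc k * H))"
    by (simp only: power_Suc mult.assoc)
  also have "\<dots> = nsqb m b * lapb m b (nsqb m b ^ Suc k * H) + scl (\<lambda>\<beta>. of_nat (2 * m + 4 * degb m b \<beta>)) (nsqb m b ^ Suc k * H)"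
    by (rule lapb_nsqb)
  also have "\<dots> = nsqb m b ^ Suc k * (scl (\<lambda>\<beta>. of_nat (2 * (k + 1) * (2 * degb m b \<beta> + 2 * k + m))) H
       + scl (\<lambda>\<beta>. of_nat (2 * m + 4 * (degb m b \<beta> + 2 * Suc k))) H)"
    using scl_nsqb_pow[of "\<lambda>d. of_nat (2 * m + 4 * d)" m b "Suc k" H] Suc
    by (simp add: mult.assoc distrib_left)
  also have "\<dots> = nsqb m b ^ Suc k * scl (\<lambda>\<beta>. of_nat (2 * (Suc k + 1) * (2 * degb m b \<beta> + 2 * Suc k + m))) H"
    by (simp only: scl_add_fun) (rule arg_cong[where f="\<lambda>z. _ * z"], rule scl_cong, simp add: algebra_simps)
  finally show ?case .
qed


lemma in_vars_iff: "in_vars m P \<longleftrightarrow> (\<forall>\<alpha> i. lk P \<alpha> \<noteq> 0 \<longrightarrow> lk \<alpha> i \<noteq> 0 \<longrightarrow> i < 2 * m)"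
  by (auto simp: in_vars_def in_keys_iff)

lemma in_vars_add: "in_vars m P \<Longrightarrow> in_vars m Q \<Longrightarrow> in_vars m (P + Q)"
  unfolding in_vars_iff lookup_add
proof (intro allI impI)
  fix \<alpha> i assume a: "\<forall>\<alpha> i. lk P \<alpha> \<noteq> 0 \<longrightarrow> lk \<alpha> i \<noteq> 0 \<longrightarrow> i < 2 * m"
    "\<forall>\<alpha> i. lk Q \<alpha> \<noteq> 0 \<longrightarrow> lk \<alpha> i \<noteq> 0 \<longrightarrow> i < 2 * m" "lk P \<alpha> + lk Q \<alpha> \<noteq> 0" "lk \<alpha> i \<noteq> 0"
  have "lk P \<alpha> \<noteq> 0 \<or> lk Q \<alpha> \<noteq> 0" using a(3) by auto
  then show "i < 2 * m" using a by blast
qed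
lemma in_vars_diff: "in_vars m P \<Longrightarrow> in_vars m Q \<Longrightarrow> in_vars m (P - Q)"
  unfolding in_vars_iff lookup_minus
proof (intro allI impI)
  fix \<alpha> i assume a: "\<forall>\<alpha> i. lk P \<alpha> \<noteq> 0 \<longrightarrow> lk \<alpha> i \<noteq> 0 \<longrightarrow> i < 2 * m"
    "\<forall>\<alpha> i. lk Q \<alpha> \<noteq> 0 \<longrightarrow> lk \<alpha> i \<noteq> 0 \<longrightarrow> i < 2 * m" "lk P \<alpha> - lk Q \<alpha> \<noteq> 0" "lk \<alpha> i \<noteq> 0"
  have "lk P \<alpha> \<noteq> 0 \<or> lk Q \<alpha> \<noteq> 0" using a(3) by auto
  then show "i < 2 * m" using a by blast
qed
lemma in_vars_zero[simp]: "in_vars m 0"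
  by (auto simp: in_vars_iff)
lemma in_vars_sum: "(\<And>j. j \<in> J \<Longrightarrow> in_vars m (f j)) \<Longrightarrow> in_vars m (\<Sum>j\<in>J. f j)"
  by (induction J rule: infinite_finite_induct) (auto intro: in_vars_add)
lemma in_vars_scl: "in_vars m P \<Longrightarrow> in_vars m (scl w P)"
  by (auto simp: in_vars_iff lookup_scl)
lemma in_vars_pderiv: "in_vars m P \<Longrightarrow> in_vars m (pderiv_var i P)"
proof (unfold in_vars_iff, intro allI impI)
  fix \<alpha> k assume P: "\<forall>\<alpha> i. lk P \<alpha> \<noteq> 0 \<longrightarrow> lk \<alpha> i \<noteq> 0 \<longrightarrow> i < 2 * m"
    and a: "lk (pderiv_var i P) \<alpha> \<noteq> 0" and b: "lk \<alpha> k \<noteq> 0"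
  have "lk P (\<alpha> + ee i) \<noteq> 0" using a by (simp add: lookup_pderiv)
  moreover have "lk (\<alpha> + ee i) k \<noteq> 0" using b by (simp add: lookup_add)
  ultimately show "k < 2 * m" using P by blast
qed
lemma in_vars_var_mult: "i < 2 * m \<Longrightarrow> in_vars m P \<Longrightarrow> in_vars m (var i * P)"
proof (unfold in_vars_iff, intro allI impI)
  assume im: "i < 2 * m"
  fix \<alpha> k assume P: "\<forall>\<alpha> i. lk P \<alpha> \<noteq> 0 \<longrightarrow> lk \<alpha> i \<noteq> 0 \<longrightarrow> i < 2 * m"
    and a: "lk (var i * P) \<alpha> \<noteq> 0" and b: "lk \<alpha> k \<noteq> 0"
  have a': "lk P (\<alpha> - ee i) \<noteq> 0" using a by (simp add: lookup_var_mult split: if_splits)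
  show "k < 2 * m"
  proof (cases "k = i")
    case True then show ?thesis using im by simp
  next
    case False
    then have "lk (\<alpha> - ee i) k \<noteq> 0" using b by (simp add: lookup_minus lk_ee)
    then show ?thesis using P a' by blast
  qed
qed
lemma in_vars_nsqb: "b + m \<le> 2 * m \<Longrightarrow> in_vars m P \<Longrightarrow> in_vars m (nsqb m b * P)"
  unfolding nsqb_mult by (auto intro!: in_vars_sum in_vars_var_mult)
lemma in_vars_nsqb_pow: "b + m \<le> 2 * m \<Longrightarrow> in_vars m P \<Longrightarrow> in_vars m (nsqb m b ^ k * P)"
  by (induction k) (auto simp: mult.assoc intro: in_vars_nsqb)
lemma in_vars_lapb: "in_vars m P \<Longrightarrow> in_vars m (lapb m b P)"
  unfolding lapb_def by (auto intro!: in_vars_sum in_vars_pderiv)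

definition degbnd :: "nat \<Rightarrow> nat \<Rightarrow> nat \<Rightarrow> cpoly \<Rightarrow> bool" where
  "degbnd m b n P \<longleftrightarrow> (\<forall>\<alpha>. lk P \<alpha> \<noteq> 0 \<longrightarrow> degb m b \<alpha> \<le> n)"

lemma degbnd_exists: "\<exists>n. degbnd m b n P"
proof -
  have "finite (Poly_Mapping.keys P)" by simp
  then have "finite (degb m b ` Poly_Mapping.keys P)" by simp
  then obtain n where "\<forall>d\<in>degb m b ` Poly_Mapping.keys P. d \<le> n"
    using finite_nat_set_iff_bounded_le by blast
  then show ?thesis unfolding degbnd_def by (intro exI[of _ n]) (auto simp: in_keys_iff)
qed

lemma degbnd_pderiv:
  assumes "degbnd m b n P" "inb m b i" "lk (pderiv_var i P) \<beta> \<noteq> 0"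
  shows "degb m b \<beta> + 1 \<le> n"
proof -
  have "lk P (\<beta> + ee i) \<noteq> 0" using assms(3) by (simp add: lookup_pderiv)
  then have "degb m b (\<beta> + ee i) \<le> n" using assms(1) by (simp add: degbnd_def)
  then show ?thesis using assms(2) by (simp add: degb_plus)
qed

lemma degbnd_lapb:
  assumes "degbnd m b n P" "lk (lapb m b P) \<beta> \<noteq> 0"
  shows "degb m b \<beta> + 2 \<le> n"
proof -
  from assms(2) obtain j where j: "j < m" and nz: "lk (pderiv_var (b + j) (pderiv_var (b + j) P)) \<beta> \<noteq> 0"
    unfolding lapb_def lookup_sum by (meson lessThan_iff sum.not_neutral_contains_not_neutral)
  have "lk (pderiv_var (b + j) P) (\<beta> + ee (b + j)) \<noteq> 0" using nz by (simp add: lookup_pderiv)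
  then have "degb m b (\<beta> + ee (b + j)) + 1 \<le> n"
    using degbnd_pderiv[OF assms(1), of "b + j"] j by simp
  then show ?thesis using j by (simp add: degb_plus)
qed


lemma fischer1:
  assumes m: "0 < m" and bm: "b + m \<le> 2 * m" and disj: "\<forall>j<m. \<not> inb m b (c + j)"
  shows "degbnd m b n Q \<Longrightarrow> in_vars m Q \<Longrightarrow> \<exists>G N. Q = (\<Sum>a\<le>N. nsqb m b ^ a * G a) \<and>
     (\<forall>a. in_vars m (G a) \<and> lapb m b (G a) = 0) \<and> (\<forall>a>N. G a = 0) \<and>
     (lapb m c Q = 0 \<longrightarrow> (\<forall>a. lapb m c (G a) = 0))"
proof (induction n arbitrary: Q rule: less_induct)
  case (less n Q)
  show ?case
  proof (cases "lapb m b Q = 0")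
    case True
    show ?thesis
      by (rule exI[of _ "\<lambda>a. if a = 0 then Q else 0"], rule exI[of _ 0]) (simp add: True less.prems)
  next
    case False
    then obtain \<beta> where "lk (lapb m b Q) \<beta> \<noteq> 0" using poly_mapping_eqI[of "lapb m b Q" 0] by auto
    then have n2: "degb m b \<beta> + 2 \<le> n" using degbnd_lapb[OF less.prems(1)] by blast
    have db: "degbnd m b (n - 2) (lapb m b Q)"
      using degbnd_lapb[OF less.prems(1)] unfolding degbnd_def by fastforce
    have ivl: "in_vars m (lapb m b Q)" using less.prems(2) by (rule in_vars_lapb)
    from less.IH[of "n - 2", OF _ db ivl] n2 obtain G' N' where
      G'1: "lapb m b Q = (\<Sum>a\<le>N'. nsqb m b ^ a * G' a)" and
      G'2: "\<forall>a. in_vars m (G' a) \<and> lapb m b (G' a) = 0" and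
      G'3: "\<forall>a>N'. G' a = 0" and
      G'4: "lapb m c (lapb m b Q) = 0 \<longrightarrow> (\<forall>a. lapb m c (G' a) = 0)"
      by auto
    define K where "K j = scl (\<lambda>\<beta>. inverse (of_nat (2 * (j + 1) * (2 * degb m b \<beta> + 2 * j + m)))) (G' j)" for j
    define R where "R = (\<Sum>j\<le>N'. nsqb m b ^ j * K j)"
    define H where "H = Q - nsqb m b * R"
    have lapK: "lapb m b (K j) = 0" for j
      using lapb_scl_own[of m b "\<lambda>d. inverse (of_nat (2 * (j + 1) * (2 * d + 2 * j + m)) :: complex)" "G' j"] G'2
      by (simp add: K_def)
    have key: "lapb m b (nsqb m b ^ Suc j * K j) = nsqb m b ^ j * G' j" for j
    proof -
      have "lapb m b (nsqb m b ^ Suc j * K j) =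
         nsqb m b ^ j * scl (\<lambda>\<beta>. of_nat (2 * (j + 1) * (2 * degb m b \<beta> + 2 * j + m))) (K j)"
        by (rule lapb_nsqb_pow[OF lapK])
      also have "scl (\<lambda>\<beta>. of_nat (2 * (j + 1) * (2 * degb m b \<beta> + 2 * j + m))) (K j) = scl (\<lambda>_. 1) (G' j)"
        unfolding K_def scl_scl
      proof (intro scl_cong)
        fix \<beta>
        have "(of_nat (2 * (j + 1) * (2 * degb m b \<beta> + 2 * j + m)) :: complex) \<noteq> 0"
          using m by (simp only: of_nat_eq_0_iff) simp
        then show "(of_nat (2 * (j + 1) * (2 * degb m b \<beta> + 2 * j + m)) :: complex) *
          inverse (of_nat (2 * (j + 1) * (2 * degb m b \<beta> + 2 * j + m))) = 1"
          by (rule right_inverse)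
      qed
      finally show ?thesis by (simp add: scl_one)
    qed
    have nR: "nsqb m b * R = (\<Sum>j\<le>N'. nsqb m b ^ Suc j * K j)"
      by (simp add: R_def sum_distrib_left mult.assoc)
    have lapH: "lapb m b H = 0"
      unfolding H_def lapb_diff nR lapb_sum key G'1 by simp
    define G where "G a = (if a = 0 then H else if a \<le> Suc N' then K (a - 1) else 0)" for a
    have "(\<Sum>a\<le>Suc N'. nsqb m b ^ a * G a) = G 0 + (\<Sum>a\<le>N'. nsqb m b ^ Suc a * G (Suc a))"
      unfolding sum.atMost_Suc_shift by simp
    also have "\<dots> = H + nsqb m b * R"
      unfolding nR by (simp add: G_def)
    also have "\<dots> = Q" by (simp add: H_def)
    finally have dec: "Q = (\<Sum>a\<le>Suc N'. nsqb m b ^ a * G a)" by simp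
    have ivK: "in_vars m (K j)" for j using G'2 by (simp add: K_def in_vars_scl)
    have ivR: "in_vars m R" unfolding R_def using bm ivK by (auto intro!: in_vars_sum in_vars_nsqb_pow)
    have ivH: "in_vars m H" unfolding H_def using bm ivR less.prems(2) by (auto intro!: in_vars_diff in_vars_nsqb)
    have cpart: "lapb m c Q = 0 \<longrightarrow> (\<forall>a. lapb m c (G a) = 0)"
    proof
      assume cq: "lapb m c Q = 0"
      have "lapb m c (lapb m b Q) = 0" by (simp only: lapb_comm[of m c b] cq lapb_zero)
      then have cG': "lapb m c (G' a) = 0" for a using G'4 by blast
      have cK: "lapb m c (K j) = 0" for j
        using lapb_scl_other[OF disj, of "\<lambda>d. inverse (of_nat (2 * (j + 1) * (2 * d + 2 * j + m)) :: complex)" "G' j"] cG'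
        by (simp add: K_def)
      have cR: "lapb m c R = 0"
        unfolding R_def lapb_sum lapb_nsqb_pow_other[OF disj] cK by simp
      have "lapb m c H = 0"
        unfolding H_def lapb_diff lapb_nsqb_other[OF disj] cR cq by simp
      then show "\<forall>a. lapb m c (G a) = 0" by (simp add: G_def cK)
    qed
    show ?thesis
      by (rule exI[of _ G], rule exI[of _ "Suc N'"])
         (use dec lapH lapK ivH ivK cpart in \<open>auto simp: G_def\<close>)
  qed
qed


definition wt :: "(nat \<Rightarrow>\<^sub>0 nat) \<Rightarrow> real" where
  "wt \<alpha> = (\<Prod>i\<in>Poly_Mapping.keys \<alpha>. fact (lk \<alpha> i))"

definition ip :: "cpoly \<Rightarrow> cpoly \<Rightarrow> complex" where
  "ip P Q = (\<Sum>\<alpha>\<in>Poly_Mapping.keys P. of_real (wt \<alpha>) * lk P \<alpha> * cnj (lk Q \<alpha>))"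

lemma ip_superset: "finite S \<Longrightarrow> Poly_Mapping.keys P \<subseteq> S \<Longrightarrow>
   ip P Q = (\<Sum>\<alpha>\<in>S. of_real (wt \<alpha>) * lk P \<alpha> * cnj (lk Q \<alpha>))"
  unfolding ip_def by (rule sum.mono_neutral_left) (auto simp: in_keys_iff)

lemma ip_add_left: "ip (P1 + P2) Q = ip P1 Q + ip P2 Q"
proof -
  let ?S = "Poly_Mapping.keys P1 \<union> Poly_Mapping.keys P2"
  have "ip (P1 + P2) Q = (\<Sum>\<alpha>\<in>?S. of_real (wt \<alpha>) * lk (P1 + P2) \<alpha> * cnj (lk Q \<alpha>))"
    by (rule ip_superset) (auto dest: set_mp[OF keys_add])
  also have "\<dots> = (\<Sum>\<alpha>\<in>?S. of_real (wt \<alpha>) * lk P1 \<alpha> * cnj (lk Q \<alpha>)) + (\<Sum>\<alpha>\<in>?S. of_real (wt \<alpha>) * lk P2 \<alpha> * cnj (lk Q \<alpha>))"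
    by (simp add: lookup_add algebra_simps sum.distrib)
  also have "\<dots> = ip P1 Q + ip P2 Q"
    by (simp add: ip_superset[symmetric])
  finally show ?thesis .
qed

lemma ip_zero_left[simp]: "ip 0 Q = 0" by (simp add: ip_def)

lemma ip_sum_left: "ip (\<Sum>j\<in>J. f j) Q = (\<Sum>j\<in>J. ip (f j) Q)"
  by (induction J rule: infinite_finite_induct) (auto simp: ip_add_left)

lemma ip_add_right: "ip P (Q1 + Q2) = ip P Q1 + ip P Q2"
  by (simp add: ip_def lookup_add algebra_simps sum.distrib)

lemma ip_zero_right[simp]: "ip P 0 = 0" by (simp add: ip_def)

lemma ip_sum_right: "ip P (\<Sum>j\<in>J. f j) = (\<Sum>j\<in>J. ip P (f j))"
  by (induction J rule: infinite_finite_induct) (auto simp: ip_add_right)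

lemma wt_superset: "finite S \<Longrightarrow> Poly_Mapping.keys \<alpha> \<subseteq> S \<Longrightarrow> wt \<alpha> = (\<Prod>i\<in>S. fact (lk \<alpha> i))"
  unfolding wt_def by (rule prod.mono_neutral_left) (auto simp: in_keys_iff)

lemma wt_step:
  assumes "0 < lk \<alpha> j"
  shows "wt \<alpha> = wt (\<alpha> - ee j) * of_nat (lk \<alpha> j)"
proof -
  let ?S = "Poly_Mapping.keys \<alpha>"
  have jS: "j \<in> ?S" using assms by (simp add: in_keys_iff)
  have sub: "Poly_Mapping.keys (\<alpha> - ee j) \<subseteq> ?S"
    by (auto simp: in_keys_iff lookup_minus lk_ee split: if_splits)
  have "wt (\<alpha> - ee j) = (\<Prod>i\<in>?S. fact (lk (\<alpha> - ee j) i))"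
    by (rule wt_superset[OF _ sub]) simp
  also have "\<dots> = fact (lk \<alpha> j - 1) * (\<Prod>i\<in>?S - {j}. fact (lk \<alpha> i))"
    by (subst prod.remove[OF _ jS]) (auto simp: lookup_minus lk_ee intro!: prod.cong)
  finally have 1: "wt (\<alpha> - ee j) = fact (lk \<alpha> j - 1) * (\<Prod>i\<in>?S - {j}. fact (lk \<alpha> i))" .
  have 2: "wt \<alpha> = fact (lk \<alpha> j) * (\<Prod>i\<in>?S - {j}. fact (lk \<alpha> i))"
    unfolding wt_def by (subst prod.remove[OF _ jS]) auto
  have 3: "(fact (lk \<alpha> j) :: real) = of_nat (lk \<alpha> j) * fact (lk \<alpha> j - 1)"
    using assms by (simp add: fact_reduce)
  show ?thesis using 1 2 3 by simp
qed

lemma wt_pos: "0 < wt \<alpha>"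
  unfolding wt_def by (rule prod_pos) simp

lemma ip_var: "ip P (var j * Q) = ip (pderiv_var j P) Q"
proof -
  let ?A = "{\<alpha>\<in>Poly_Mapping.keys P. 0 < lk \<alpha> j}"
  let ?f = "\<lambda>\<alpha>. (\<alpha>::nat \<Rightarrow>\<^sub>0 nat) - ee j"
  have bk: "\<And>\<alpha>. \<alpha> \<in> ?A \<Longrightarrow> \<alpha> - ee j + ee j = \<alpha>"
    by (auto simp: poly_mapping_eq_iff fun_eq_iff lookup_add lookup_minus lk_ee)
  have inj: "inj_on ?f ?A" by (metis (no_types, lifting) bk inj_onI)
  have "ip P (var j * Q) = (\<Sum>\<alpha>\<in>?A. of_real (wt \<alpha>) * lk P \<alpha> * cnj (lk Q (\<alpha> - ee j)))"
    unfolding ip_def lookup_var_mult by (rule sum.mono_neutral_cong_right) auto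
  also have "\<dots> = (\<Sum>\<alpha>\<in>?A. of_real (wt (\<alpha> - ee j)) * (of_nat (lk (\<alpha> - ee j) j + 1) * lk P (\<alpha> - ee j + ee j)) * cnj (lk Q (\<alpha> - ee j)))"
  proof (rule sum.cong[OF refl])
    fix \<alpha> assume a: "\<alpha> \<in> ?A"
    then have "lk (\<alpha> - ee j) j + 1 = lk \<alpha> j" by (simp add: lookup_minus lk_ee)
    then show "of_real (wt \<alpha>) * lk P \<alpha> * cnj (lk Q (\<alpha> - ee j)) =
       of_real (wt (\<alpha> - ee j)) * (of_nat (lk (\<alpha> - ee j) j + 1) * lk P (\<alpha> - ee j + ee j)) * cnj (lk Q (\<alpha> - ee j))"
      using a bk[OF a] wt_step[of \<alpha> j] by simp
  qed
  also have "\<dots> = (\<Sum>\<beta>\<in>?f ` ?A. of_real (wt \<beta>) * (of_nat (lk \<beta> j + 1) * lk P (\<beta> + ee j)) * cnj (lk Q \<beta>))"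
    by (simp add: sum.reindex[OF inj])
  also have "\<dots> = ip (pderiv_var j P) Q"
  proof -
    have fin: "finite (?f ` ?A)" by simp
    have sub: "Poly_Mapping.keys (pderiv_var j P) \<subseteq> ?f ` ?A"
    proof
      fix \<beta> assume "\<beta> \<in> Poly_Mapping.keys (pderiv_var j P)"
      then have "lk P (\<beta> + ee j) \<noteq> 0" by (simp add: in_keys_iff lookup_pderiv)
      then have "\<beta> + ee j \<in> ?A" by (simp add: in_keys_iff lookup_add lk_ee)
      moreover have "\<beta> = \<beta> + ee j - ee j"
        by (auto simp: poly_mapping_eq_iff fun_eq_iff lookup_add lookup_minus lk_ee)
      ultimately show "\<beta> \<in> ?f ` ?A" by blast
    qed
    show ?thesis using ip_superset[OF fin sub, of Q] by (simp add: lookup_pderiv)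
  qed
  finally show ?thesis .
qed

lemma ip_self_zero: "ip P P = 0 \<Longrightarrow> P = 0"
proof -
  assume h: "ip P P = 0"
  have "ip P P = of_real (\<Sum>\<alpha>\<in>Poly_Mapping.keys P. wt \<alpha> * (cmod (lk P \<alpha>))\<^sup>2)"
    unfolding ip_def of_real_sum
    by (intro sum.cong refl) (metis complex_norm_square mult.assoc of_real_mult)
  with h have s: "(\<Sum>\<alpha>\<in>Poly_Mapping.keys P. wt \<alpha> * (cmod (lk P \<alpha>))\<^sup>2) = 0"
    by (metis of_real_eq_0_iff)
  have "\<forall>\<alpha>\<in>Poly_Mapping.keys P. wt \<alpha> * (cmod (lk P \<alpha>))\<^sup>2 = 0"
  proof -
    have nn: "\<And>\<alpha>. 0 \<le> wt \<alpha> * (cmod (lk P \<alpha>))\<^sup>2"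
      by (meson less_imp_le mult_nonneg_nonneg wt_pos zero_le_power2)
    show ?thesis using s by (subst (asm) sum_nonneg_eq_0_iff) (simp_all add: nn)
  qed
  then have "Poly_Mapping.keys P = {}"
  proof (intro equals0I)
    fix \<alpha> assume a: "\<forall>\<alpha>\<in>Poly_Mapping.keys P. wt \<alpha> * (cmod (lk P \<alpha>))\<^sup>2 = 0" and k: "\<alpha> \<in> Poly_Mapping.keys P"
    then have "wt \<alpha> * (cmod (lk P \<alpha>))\<^sup>2 = 0" by blast
    moreover have "wt \<alpha> * (cmod (lk P \<alpha>))\<^sup>2 > 0" using k wt_pos[of \<alpha>] by (simp add: in_keys_iff)
    ultimately show False by linarith
  qed
  then show "P = 0" by simp
qed

lemma ip_nsqb: "ip D (nsqb m b * R) = ip (lapb m b D) R"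
  unfolding nsqb_mult ip_sum_right ip_var lapb_def ip_sum_left ..

lemma core:
  assumes "lapb m 0 D = 0" "lapb m m D = 0" "D = nsqb m 0 * R1 + nsqb m m * R2"
  shows "D = 0"
proof -
  have "ip D D = ip D (nsqb m 0 * R1) + ip D (nsqb m m * R2)"
    using assms(3) by (metis ip_add_right)
  also have "\<dots> = 0" by (simp add: ip_nsqb assms(1,2))
  finally show ?thesis by (rule ip_self_zero)
qed


lemma harm_iff: "harm m P \<longleftrightarrow> in_vars m P \<and> lapb m 0 P = 0 \<and> lapb m m P = 0"
  by (simp add: harm_def lap_x_eq lap_u_eq)

lemma decomp_exists:
  assumes m: "0 < m" and Q: "in_vars m Q"
  shows "\<exists>N Hs. (\<forall>a b. harm m (Hs a b)) \<and>
     Q = (\<Sum>a\<le>N. \<Sum>b\<le>N. normsq_x m ^ a * normsq_u m ^ b * Hs a b)"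
proof -
  obtain n where n: "degbnd m 0 n Q" using degbnd_exists by blast
  from fischer1[of m 0 m n Q] m n Q obtain G N where
    G1: "Q = (\<Sum>a\<le>N. nsqb m 0 ^ a * G a)" and G2: "\<forall>a. in_vars m (G a) \<and> lapb m 0 (G a) = 0"
    and G3: "\<forall>a>N. G a = 0" by auto
  have "\<forall>a. \<exists>HH NN. G a = (\<Sum>b\<le>NN. nsqb m m ^ b * HH b) \<and>
     (\<forall>b. in_vars m (HH b) \<and> lapb m m (HH b) = 0) \<and> (\<forall>b>NN. HH b = 0) \<and>
     (lapb m 0 (G a) = 0 \<longrightarrow> (\<forall>b. lapb m 0 (HH b) = 0))"
  proof
    fix a
    obtain n where "degbnd m m n (G a)" using degbnd_exists by blast
    then show "\<exists>HH NN. G a = (\<Sum>b\<le>NN. nsqb m m ^ b * HH b) \<and>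
     (\<forall>b. in_vars m (HH b) \<and> lapb m m (HH b) = 0) \<and> (\<forall>b>NN. HH b = 0) \<and>
     (lapb m 0 (G a) = 0 \<longrightarrow> (\<forall>b. lapb m 0 (HH b) = 0))"
      using fischer1[of m m 0 n "G a"] m G2 by simp
  qed
  then have "\<exists>HH. \<forall>a. \<exists>NN. G a = (\<Sum>b\<le>NN. nsqb m m ^ b * HH a b) \<and>
     (\<forall>b. in_vars m (HH a b) \<and> lapb m m (HH a b) = 0) \<and> (\<forall>b>NN. HH a b = 0) \<and>
     (lapb m 0 (G a) = 0 \<longrightarrow> (\<forall>b. lapb m 0 (HH a b) = 0))"
    by (rule choice)
  then obtain HH where "\<forall>a. \<exists>NN. G a = (\<Sum>b\<le>NN. nsqb m m ^ b * HH a b) \<and>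
     (\<forall>b. in_vars m (HH a b) \<and> lapb m m (HH a b) = 0) \<and> (\<forall>b>NN. HH a b = 0) \<and>
     (lapb m 0 (G a) = 0 \<longrightarrow> (\<forall>b. lapb m 0 (HH a b) = 0))" by blast
  then have "\<exists>NN. \<forall>a. G a = (\<Sum>b\<le>NN a. nsqb m m ^ b * HH a b) \<and>
     (\<forall>b. in_vars m (HH a b) \<and> lapb m m (HH a b) = 0) \<and> (\<forall>b>NN a. HH a b = 0) \<and>
     (lapb m 0 (G a) = 0 \<longrightarrow> (\<forall>b. lapb m 0 (HH a b) = 0))"
    by (rule choice)
  then obtain NN where HH: "\<And>a. G a = (\<Sum>b\<le>NN a. nsqb m m ^ b * HH a b) \<and>
     (\<forall>b. in_vars m (HH a b) \<and> lapb m m (HH a b) = 0) \<and> (\<forall>b>NN a. HH a b = 0) \<and>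
     (lapb m 0 (G a) = 0 \<longrightarrow> (\<forall>b. lapb m 0 (HH a b) = 0))" by blast
  define Nt where "Nt = N + (\<Sum>a\<le>N. NN a)"
  define Hs where "Hs a b = (if a \<le> N then HH a b else 0)" for a b
  have harm: "\<forall>a b. harm m (Hs a b)"
    using HH G2 by (auto simp: Hs_def harm_iff)
  have NNle: "a \<le> N \<Longrightarrow> NN a \<le> Nt" for a
    unfolding Nt_def using member_le_sum[of a "{..N}" NN] by simp
  have Ga: "G a = (\<Sum>b\<le>Nt. nsqb m m ^ b * Hs a b)" for a
  proof (cases "a \<le> N")
    case True
    have "G a = (\<Sum>b\<le>NN a. nsqb m m ^ b * HH a b)" using HH by blast
    also have "\<dots> = (\<Sum>b\<le>Nt. nsqb m m ^ b * HH a b)"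
    proof (rule sum.mono_neutral_left)
      show "{..NN a} \<subseteq> {..Nt}" using NNle[OF True] by auto
      have "\<forall>b>NN a. HH a b = 0" using HH by blast
      then show "\<forall>i\<in>{..Nt} - {..NN a}. nsqb m m ^ i * HH a i = 0" by auto
    qed simp
    finally show ?thesis using True by (simp add: Hs_def)
  next
    case False then show ?thesis using G3 by (simp add: Hs_def)
  qed
  have "Q = (\<Sum>a\<le>Nt. nsqb m 0 ^ a * G a)"
    unfolding G1 by (rule sum.mono_neutral_left) (use G3 in \<open>auto simp: Nt_def\<close>)
  also have "\<dots> = (\<Sum>a\<le>Nt. \<Sum>b\<le>Nt. normsq_x m ^ a * normsq_u m ^ b * Hs a b)"
    by (simp add: Ga sum_distrib_left mult.assoc normsq_x_eq normsq_u_eq)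
  finally show ?thesis using harm by blast
qed

lemma sum_atMost_split0: "(\<Sum>a\<le>N. f a) = f 0 + (\<Sum>a<N. f (Suc a))"
  by (cases N) (simp_all only: sum.atMost_Suc_shift lessThan_Suc_atMost, simp)

lemma decomp_split:
  fixes x y :: "'a::comm_ring_1"
  shows "\<exists>R1 R2. (\<Sum>a\<le>N. \<Sum>b\<le>N. x ^ a * y ^ b * H a b) = H 0 0 + x * R1 + y * R2"
proof -
  have "(\<Sum>a\<le>N. \<Sum>b\<le>N. x ^ a * y ^ b * H a b) = (\<Sum>b\<le>N. x ^ 0 * y ^ b * H 0 b) +
      (\<Sum>a<N. \<Sum>b\<le>N. x ^ Suc a * y ^ b * H (Suc a) b)"
    by (rule sum_atMost_split0)
  also have "(\<Sum>b\<le>N. x ^ 0 * y ^ b * H 0 b) = x ^ 0 * y ^ 0 * H 0 0 + (\<Sum>b<N. x ^ 0 * y ^ Suc b * H 0 (Suc b))"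
    by (rule sum_atMost_split0)
  also have "(\<Sum>b<N. x ^ 0 * y ^ Suc b * H 0 (Suc b)) = y * (\<Sum>b<N. y ^ b * H 0 (Suc b))"
    by (simp add: sum_distrib_left mult.assoc)
  also have "(\<Sum>a<N. \<Sum>b\<le>N. x ^ Suc a * y ^ b * H (Suc a) b) = x * (\<Sum>a<N. \<Sum>b\<le>N. x ^ a * y ^ b * H (Suc a) b)"
    by (simp add: sum_distrib_left mult.assoc)
  finally have "(\<Sum>a\<le>N. \<Sum>b\<le>N. x ^ a * y ^ b * H a b) = H 0 0 + x * (\<Sum>a<N. \<Sum>b\<le>N. x ^ a * y ^ b * H (Suc a) b) + y * (\<Sum>b<N. y ^ b * H 0 (Suc b))"
    by (simp add: algebra_simps)
  then show ?thesis by blast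
qed
lemma harm_eq_unique:
  assumes "harm m H1" "harm m H2"
    "H1 + normsq_x m * R1 + normsq_u m * R2 = H2 + normsq_x m * R1' + normsq_u m * R2'"
  shows "H1 = H2"
proof -
  have "H1 - H2 = nsqb m 0 * (R1' - R1) + nsqb m m * (R2' - R2)"
    using assms(3) unfolding normsq_x_eq normsq_u_eq by (simp add: algebra_simps)
  moreover have "lapb m 0 (H1 - H2) = 0" "lapb m m (H1 - H2) = 0"
    using assms(1,2) by (simp_all add: harm_iff lapb_diff)
  ultimately have "H1 - H2 = 0" using core by blast
  then show ?thesis by simp
qed

lemma pi_s_props:
  assumes m: "0 < m" and Q: "in_vars m Q"
  shows "harm m (pi_s m Q) \<and> (\<exists>R1 R2. Q = pi_s m Q + normsq_x m * R1 + normsq_u m * R2)"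
proof -
  obtain N Hs where hs: "\<forall>a b. harm m (Hs a b)" and
    dec: "Q = (\<Sum>a\<le>N. \<Sum>b\<le>N. normsq_x m ^ a * normsq_u m ^ b * Hs a b)"
    using decomp_exists[OF m Q] by blast
  obtain R1 R2 where r: "Q = Hs 0 0 + normsq_x m * R1 + normsq_u m * R2"
    using decomp_split[where N=N and x="normsq_x m" and y="normsq_u m" and H=Hs] dec by metis
  have "pi_s m Q = Hs 0 0"
    unfolding pi_s_def
  proof (rule the_equality)
    show "\<exists>N Hs'. (\<forall>a b. harm m (Hs' a b)) \<and> Q = (\<Sum>a\<le>N. \<Sum>b\<le>N. normsq_x m ^ a * normsq_u m ^ b * Hs' a b) \<and> Hs 0 0 = Hs' 0 0"
      using hs dec by blast
  next
    fix H assume "\<exists>N Hs'. (\<forall>a b. harm m (Hs' a b)) \<and> Q = (\<Sum>a\<le>N. \<Sum>b\<le>N. normsq_x m ^ a * normsq_u m ^ b * Hs' a b) \<and> H = Hs' 0 0"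
    then obtain N' Hs' where hs': "\<forall>a b. harm m (Hs' a b)" and
      dec': "Q = (\<Sum>a\<le>N'. \<Sum>b\<le>N'. normsq_x m ^ a * normsq_u m ^ b * Hs' a b)" and H: "H = Hs' 0 0" by blast
    obtain R1' R2' where r': "Q = Hs' 0 0 + normsq_x m * R1' + normsq_u m * R2'"
      using decomp_split[where N=N' and x="normsq_x m" and y="normsq_u m" and H=Hs'] dec' by metis
    show "H = Hs 0 0" unfolding H
      by (rule harm_eq_unique[of m _ _ R1' R2' R1 R2]) (use hs hs' r r' in auto)
  qed
  then show ?thesis using hs r by auto
qed

lemma pi_s_char:
  assumes m: "0 < m" and Q: "in_vars m Q" and H: "harm m H"
    and eq: "Q = H + normsq_x m * R1 + normsq_u m * R2"
  shows "pi_s m Q = H"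
proof -
  obtain R1' R2' where "Q = pi_s m Q + normsq_x m * R1' + normsq_u m * R2'" and "harm m (pi_s m Q)"
    using pi_s_props[OF m Q] by blast
  then show ?thesis using harm_eq_unique[of m "pi_s m Q" H R1' R2' R1 R2] H eq by auto
qed


definition scl2 :: "nat \<Rightarrow> (nat \<Rightarrow> nat \<Rightarrow> complex) \<Rightarrow> cpoly \<Rightarrow> cpoly" where
  "scl2 m F P = scl (\<lambda>\<beta>. F (degb m 0 \<beta>) (degb m m \<beta>)) P"

lemma scl2_scl2: "scl2 m F (scl2 m G P) = scl2 m (\<lambda>p q. F p q * G p q) P"
  by (simp add: scl2_def scl_scl)
lemma scl2_add_fun: "scl2 m F P + scl2 m G P = scl2 m (\<lambda>p q. F p q + G p q) P"
  by (simp add: scl2_def scl_add_fun)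
lemma scl2_diff_fun: "scl2 m F P - scl2 m G P = scl2 m (\<lambda>p q. F p q - G p q) P"
  by (simp add: scl2_def scl_diff_fun)
lemma scl2_add: "scl2 m F (P + Q) = scl2 m F P + scl2 m F Q"
  by (simp add: scl2_def scl_add)
lemma scl2_diff: "scl2 m F (P - Q) = scl2 m F P - scl2 m F Q"
  by (simp add: scl2_def scl_diff)
lemma scl2_zero[simp]: "scl2 m F 0 = 0"
  by (simp add: scl2_def)
lemma scl2_one: "scl2 m (\<lambda>p q. 1) P = P"
  by (simp add: scl2_def scl_one)
lemma scl2_sum: "scl2 m F (\<Sum>j\<in>J. f j) = (\<Sum>j\<in>J. scl2 m F (f j))"
  by (simp add: scl2_def scl_sum)

lemma pderiv_scl2: "pderiv_var i (scl2 m F X) =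
  scl2 m (\<lambda>p q. F (p + (if inb m 0 i then 1 else 0)) (q + (if inb m m i then 1 else 0))) (pderiv_var i X)"
  unfolding scl2_def by (rule pderiv_scl_deg)

lemma var_scl2_gen: "var i * scl2 m (\<lambda>p q. F (p + (if inb m 0 i then 1 else 0)) (q + (if inb m m i then 1 else 0))) X =
  scl2 m F (var i * X)"
  unfolding scl2_def by (rule var_scl_deg)

lemma pderiv_scl2_x: "j < m \<Longrightarrow> pderiv_var j (scl2 m F X) = scl2 m (\<lambda>p q. F (p + 1) q) (pderiv_var j X)"
  using pderiv_scl2[of j m F X] by simp
lemma pderiv_scl2_u: "j < m \<Longrightarrow> pderiv_var (m + j) (scl2 m F X) = scl2 m (\<lambda>p q. F p (q + 1)) (pderiv_var (m + j) X)"
  using pderiv_scl2[of "m + j" m F X] by simp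
lemma var_scl2_x: "j < m \<Longrightarrow> var j * scl2 m (\<lambda>p q. F (p + 1) q) X = scl2 m F (var j * X)"
  using var_scl2_gen[of j m F X] by simp
lemma var_scl2_u: "j < m \<Longrightarrow> var (m + j) * scl2 m (\<lambda>p q. F p (q + 1)) X = scl2 m F (var (m + j) * X)"
  using var_scl2_gen[of "m + j" m F X] by simp

lemma lapb0_scl2: "lapb m 0 (scl2 m F X) = scl2 m (\<lambda>p q. F (p + 2) q) (lapb m 0 X)"
proof -
  have "\<And>j. j < m \<Longrightarrow> pderiv_var j (pderiv_var j (scl2 m F X)) = scl2 m (\<lambda>p q. F (p + 2) q) (pderiv_var j (pderiv_var j X))"
    using pderiv_scl2_x[of _ m F X] pderiv_scl2_x[of _ m "\<lambda>p q. F (p + 1) q"] by (simp add: add.assoc)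
  then show ?thesis by (simp add: lapb_def scl2_sum)
qed

lemma lapbm_scl2: "lapb m m (scl2 m F X) = scl2 m (\<lambda>p q. F p (q + 2)) (lapb m m X)"
proof -
  have "\<And>j. j < m \<Longrightarrow> pderiv_var (m + j) (pderiv_var (m + j) (scl2 m F X)) = scl2 m (\<lambda>p q. F p (q + 2)) (pderiv_var (m + j) (pderiv_var (m + j) X))"
    using pderiv_scl2_u[of _ m F X] pderiv_scl2_u[of _ m "\<lambda>p q. F p (q + 1)"] by (simp add: add.assoc)
  then show ?thesis by (simp add: lapb_def scl2_sum)
qed

lemma nsq0_scl2: "scl2 m F (nsqb m 0 * X) = nsqb m 0 * scl2 m (\<lambda>p q. F (p + 2) q) X"
proof -
  have "\<And>j. j < m \<Longrightarrow> var j * (var j * scl2 m (\<lambda>p q. F (p + 2) q) X) = scl2 m F (var j * (var j * X))"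
    using var_scl2_x[of _ m F] var_scl2_x[of _ m "\<lambda>p q. F (p + 1) q"] by (simp add: add.assoc)
  then show ?thesis by (simp add: nsqb_mult scl2_sum sum_distrib_left)
qed

lemma nsqm_scl2: "scl2 m F (nsqb m m * X) = nsqb m m * scl2 m (\<lambda>p q. F p (q + 2)) X"
proof -
  have "\<And>j. j < m \<Longrightarrow> var (m + j) * (var (m + j) * scl2 m (\<lambda>p q. F p (q + 2)) X) = scl2 m F (var (m + j) * (var (m + j) * X))"
    using var_scl2_u[of _ m F] var_scl2_u[of _ m "\<lambda>p q. F p (q + 1)"] by (simp add: add.assoc)
  then show ?thesis by (simp add: nsqb_mult scl2_sum sum_distrib_left)
qed

lemma in_vars_scl2: "in_vars m H \<Longrightarrow> in_vars m (scl2 m F H)"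
  by (simp add: scl2_def in_vars_scl)

lemma harm_scl2: "harm m H \<Longrightarrow> harm m (scl2 m F H)"
  by (simp add: harm_iff lapb0_scl2 lapbm_scl2 in_vars_scl2)


context fixes m :: nat assumes m: "0 < m"
begin

lemma pi_s_harm: "harm m H \<Longrightarrow> pi_s m H = H"
  by (rule pi_s_char[OF m, of H H 0 0]) (auto simp: harm_def)

lemma pi_s_add: "in_vars m Q1 \<Longrightarrow> in_vars m Q2 \<Longrightarrow> pi_s m (Q1 + Q2) = pi_s m Q1 + pi_s m Q2"
proof -
  assume q: "in_vars m Q1" "in_vars m Q2"
  obtain A1 B1 where 1: "Q1 = pi_s m Q1 + normsq_x m * A1 + normsq_u m * B1" "harm m (pi_s m Q1)"
    using pi_s_props[OF m q(1)] by blast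
  obtain A2 B2 where 2: "Q2 = pi_s m Q2 + normsq_x m * A2 + normsq_u m * B2" "harm m (pi_s m Q2)"
    using pi_s_props[OF m q(2)] by blast
  show ?thesis
  proof (rule pi_s_char[OF m _ _, of _ _ "A1 + A2" "B1 + B2"])
    show "in_vars m (Q1 + Q2)" using q by (rule in_vars_add)
    show "harm m (pi_s m Q1 + pi_s m Q2)" using 1(2) 2(2) by (simp add: harm_iff in_vars_add lapb_add)
    show "Q1 + Q2 = pi_s m Q1 + pi_s m Q2 + normsq_x m * (A1 + A2) + normsq_u m * (B1 + B2)"
      by (rule trans[OF arg_cong2[where f="(+)", OF 1(1) 2(1)]]) (simp add: algebra_simps)
  qed
qed

lemma pi_s_diff: "in_vars m Q1 \<Longrightarrow> in_vars m Q2 \<Longrightarrow> pi_s m (Q1 - Q2) = pi_s m Q1 - pi_s m Q2"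
proof -
  assume q: "in_vars m Q1" "in_vars m Q2"
  have "pi_s m Q1 = pi_s m ((Q1 - Q2) + Q2)" by simp
  also have "\<dots> = pi_s m (Q1 - Q2) + pi_s m Q2" using q by (intro pi_s_add in_vars_diff)
  finally show ?thesis by simp
qed

lemma pi_s_nsq0: "in_vars m R \<Longrightarrow> pi_s m (nsqb m 0 * R) = 0"
  by (rule pi_s_char[OF m, of _ 0 R 0]) (auto simp: harm_iff normsq_x_eq intro: in_vars_nsqb)

lemma pi_s_nsqm: "in_vars m R \<Longrightarrow> pi_s m (nsqb m m * R) = 0"
  by (rule pi_s_char[OF m, of _ 0 0 R]) (auto simp: harm_iff normsq_u_eq intro: in_vars_nsqb)

lemma pi_s_scl2: "in_vars m Q \<Longrightarrow> pi_s m (scl2 m F Q) = scl2 m F (pi_s m Q)"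
proof -
  assume q: "in_vars m Q"
  obtain A B where 1: "Q = pi_s m Q + normsq_x m * A + normsq_u m * B" "harm m (pi_s m Q)"
    using pi_s_props[OF m q] by blast
  show ?thesis
  proof (rule pi_s_char[OF m _ _, of _ _ "scl2 m (\<lambda>p q. F (p + 2) q) A" "scl2 m (\<lambda>p q. F p (q + 2)) B"])
    show "in_vars m (scl2 m F Q)" using q by (rule in_vars_scl2)
    show "harm m (scl2 m F (pi_s m Q))" using 1(2) by (rule harm_scl2)
    have "scl2 m F Q = scl2 m F (pi_s m Q) + scl2 m F (normsq_x m * A) + scl2 m F (normsq_u m * B)"
      using 1(1) by (metis scl2_add)
    then show "scl2 m F Q = scl2 m F (pi_s m Q) + normsq_x m * scl2 m (\<lambda>p q. F (p + 2) q) A +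
      normsq_u m * scl2 m (\<lambda>p q. F p (q + 2)) B"
      by (simp add: normsq_x_eq normsq_u_eq nsq0_scl2 nsqm_scl2)
  qed
qed

end

lemma eig_apply_scl2: "eig_apply m F P = scl2 m F P"
proof (rule poly_mapping_eqI)
  fix \<beta>
  let ?I = "(\<lambda>\<alpha>. (xdeg m \<alpha>, udeg m \<alpha>)) ` Poly_Mapping.keys P"
  let ?x0 = "(xdeg m \<beta>, udeg m \<beta>)"
  have bc: "lk (bicomp m p q P) \<beta> = (if xdeg m \<beta> = p \<and> udeg m \<beta> = q then lk P \<beta> else 0)" for p q
  proof -
    have "lk (bicomp m p q P) \<beta> = (\<Sum>\<alpha>\<in>{\<alpha>\<in>Poly_Mapping.keys P. xdeg m \<alpha> = p \<and> udeg m \<alpha> = q}. if \<alpha> = \<beta> then lk P \<alpha> else 0)"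
      unfolding bicomp_def lookup_sum by (intro sum.cong refl) (simp add: lk_single)
    also have "\<dots> = (if \<beta> \<in> {\<alpha>\<in>Poly_Mapping.keys P. xdeg m \<alpha> = p \<and> udeg m \<alpha> = q} then lk P \<beta> else 0)"
      by (simp add: sum.delta)
    finally show ?thesis by (auto simp: in_keys_iff)
  qed
  define g where "g x = F (fst x) (snd x) * (if ?x0 = x then lk P \<beta> else 0)" for x
  have "lk (eig_apply m F P) \<beta> = (\<Sum>x\<in>?I. g x)"
    unfolding eig_apply_def lookup_sum
  proof (intro sum.cong refl)
    fix x assume "x \<in> ?I"
    obtain p q where x: "x = (p, q)" by (cases x)
    show "lk (case x of (p, q) \<Rightarrow> cconst (F p q) * bicomp m p q P) \<beta> = g x"
      unfolding x g_def by (simp add: lookup_cconst_mult bc)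
  qed
  also have "\<dots> = (\<Sum>x\<in>?I. if ?x0 = x then g ?x0 else 0)"
    by (intro sum.cong refl) (simp add: g_def)
  also have "\<dots> = F (xdeg m \<beta>) (udeg m \<beta>) * lk P \<beta>"
    by (simp only: sum.delta'[OF finite_imageI[OF finite_keys]]) (auto simp: g_def in_keys_iff)
  finally show "lk (eig_apply m F P) \<beta> = lk (scl2 m F P) \<beta>"
    by (simp add: scl2_def lookup_scl xdeg_eq udeg_eq)
qed


lemma x_du_add: "x_du m (P + Q) = x_du m P + x_du m Q"
  by (simp add: x_du_def pderiv_add distrib_left sum.distrib)
lemma x_du_diff: "x_du m (P - Q) = x_du m P - x_du m Q"
  by (simp add: x_du_def pderiv_diff right_diff_distrib sum_subtractf)
lemma u_dx_add: "u_dx m (P + Q) = u_dx m P + u_dx m Q"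
  by (simp add: u_dx_def pderiv_add distrib_left sum.distrib)
lemma u_dx_diff: "u_dx m (P - Q) = u_dx m P - u_dx m Q"
  by (simp add: u_dx_def pderiv_diff right_diff_distrib sum_subtractf)
lemma x_du_zero[simp]: "x_du m 0 = 0" by (simp add: x_du_def)
lemma u_dx_zero[simp]: "u_dx m 0 = 0" by (simp add: u_dx_def)

lemma ux_mult: "ux m * Y = (\<Sum>j<m. var (m + j) * (var j * Y))"
  by (simp add: ux_def sum_distrib_right mult.assoc)

lemma x_du_nsqm: "x_du m (nsqb m m * Y) = nsqb m m * x_du m Y + 2 * (ux m * Y)"
proof -
  have "\<And>j. j < m \<Longrightarrow> var j * pderiv_var (m + j) (nsqb m m * Y) =
     nsqb m m * (var j * pderiv_var (m + j) Y) + 2 * (var (m + j) * (var j * Y))"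
  proof -
    fix j assume j: "j < m"
    have "pderiv_var (m + j) (nsqb m m * Y) = (var (m + j) * Y + var (m + j) * Y) + nsqb m m * pderiv_var (m + j) Y"
      using pderiv_nsqb[of "m + j" m m Y] j by simp
    then show "?thesis j" by (simp add: algebra_simps)
  qed
  then have "x_du m (nsqb m m * Y) = (\<Sum>j<m. nsqb m m * (var j * pderiv_var (m + j) Y) + 2 * (var (m + j) * (var j * Y)))"
    by (simp add: x_du_def)
  also have "\<dots> = nsqb m m * x_du m Y + 2 * (ux m * Y)"
    by (simp add: x_du_def ux_mult sum.distrib sum_distrib_left)
  finally show ?thesis .
qed

lemma u_dx_nsq0: "u_dx m (nsqb m 0 * Y) = nsqb m 0 * u_dx m Y + 2 * (ux m * Y)"
proof -
  have "\<And>j. j < m \<Longrightarrow> var (m + j) * pderiv_var j (nsqb m 0 * Y) =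
     nsqb m 0 * (var (m + j) * pderiv_var j Y) + 2 * (var (m + j) * (var j * Y))"
  proof -
    fix j assume j: "j < m"
    have "pderiv_var j (nsqb m 0 * Y) = (var j * Y + var j * Y) + nsqb m 0 * pderiv_var j Y"
      using pderiv_nsqb[of j m 0 Y] j by simp
    then show "?thesis j" by (simp add: algebra_simps)
  qed
  then have "u_dx m (nsqb m 0 * Y) = (\<Sum>j<m. nsqb m 0 * (var (m + j) * pderiv_var j Y) + 2 * (var (m + j) * (var j * Y)))"
    by (simp add: u_dx_def)
  also have "\<dots> = nsqb m 0 * u_dx m Y + 2 * (ux m * Y)"
    by (simp add: u_dx_def ux_mult sum.distrib sum_distrib_left)
  finally show ?thesis .
qed

lemma x_du_u_dx: "x_du m (u_dx m P) = (\<Sum>j<m. var j * pderiv_var j P) +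
   (\<Sum>j<m. \<Sum>k<m. var j * (var (m + k) * pderiv_var (m + j) (pderiv_var k P)))"
proof -
  have "\<And>j. j < m \<Longrightarrow> var j * pderiv_var (m + j) (u_dx m P) =
    var j * pderiv_var j P + (\<Sum>k<m. var j * (var (m + k) * pderiv_var (m + j) (pderiv_var k P)))"
  proof -
    fix j assume j: "j < m"
    have "pderiv_var (m + j) (u_dx m P) = (\<Sum>k<m. (if j = k then pderiv_var k P else 0)) +
       (\<Sum>k<m. var (m + k) * pderiv_var (m + j) (pderiv_var k P))"
      by (simp add: u_dx_def pderiv_sum pderiv_var_mult sum.distrib)
    also have "(\<Sum>k<m. (if j = k then pderiv_var k P else 0)) = pderiv_var j P"
      using j by (simp add: sum.delta)
    finally show "?thesis j" by (simp add: distrib_left sum_distrib_left)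
  qed
  then show ?thesis by (simp add: x_du_def sum.distrib)
qed

lemma u_dx_x_du: "u_dx m (x_du m P) = (\<Sum>j<m. var (m + j) * pderiv_var (m + j) P) +
   (\<Sum>k<m. \<Sum>j<m. var (m + k) * (var j * pderiv_var k (pderiv_var (m + j) P)))"
proof -
  have "\<And>k. k < m \<Longrightarrow> var (m + k) * pderiv_var k (x_du m P) =
    var (m + k) * pderiv_var (m + k) P + (\<Sum>j<m. var (m + k) * (var j * pderiv_var k (pderiv_var (m + j) P)))"
  proof -
    fix k assume k: "k < m"
    have "pderiv_var k (x_du m P) = (\<Sum>j<m. (if k = j then pderiv_var (m + j) P else 0)) +
       (\<Sum>j<m. var j * pderiv_var k (pderiv_var (m + j) P))"
      by (simp add: x_du_def pderiv_sum pderiv_var_mult sum.distrib)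
    also have "(\<Sum>j<m. (if k = j then pderiv_var (m + j) P else 0)) = pderiv_var (m + k) P"
      using k by (simp add: sum.delta)
    finally show "?thesis k" by (simp add: distrib_left sum_distrib_left)
  qed
  then show ?thesis by (simp add: u_dx_def sum.distrib)
qed

lemma comm_xu: "x_du m (u_dx m P) - u_dx m (x_du m P) = scl2 m (\<lambda>p q. of_nat p - of_nat q) P"
proof -
  have dd: "(\<Sum>j<m. \<Sum>k<m. var j * (var (m + k) * pderiv_var (m + j) (pderiv_var k P))) =
     (\<Sum>k<m. \<Sum>j<m. var (m + k) * (var j * pderiv_var k (pderiv_var (m + j) P)))"
    by (subst sum.swap) (simp add: mult.left_commute pderiv_comm)
  have e0: "(\<Sum>j<m. var j * pderiv_var j P) = scl (\<lambda>\<beta>. of_nat (degb m 0 \<beta>)) P"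
    using euler_block[where m=m and b=0 and X=P] by simp
  have em: "(\<Sum>j<m. var (m + j) * pderiv_var (m + j) P) = scl (\<lambda>\<beta>. of_nat (degb m m \<beta>)) P"
    by (rule euler_block)
  show ?thesis
    unfolding x_du_u_dx u_dx_x_du dd e0 em
    by (simp add: scl2_def scl_diff_fun)
qed

lemma pderiv2_var_mult: "pderiv_var i (pderiv_var i (var a * Z)) =
   (if i = a then 2 * pderiv_var i Z else 0) + var a * pderiv_var i (pderiv_var i Z)"
  by (cases "i = a") (simp_all add: pderiv_var_mult pderiv_add)

lemma lapbm_u_dx: "lapb m m (u_dx m P) = u_dx m (lapb m m P) + 2 * du_dx m P"
proof -
  have "lapb m m (u_dx m P) = (\<Sum>j<m. \<Sum>k<m. pderiv_var (m + k) (pderiv_var (m + k) (var (m + j) * pderiv_var j P)))"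
    unfolding lapb_def u_dx_def pderiv_sum by (rule sum.swap)
  also have "\<dots> = (\<Sum>j<m. 2 * pderiv_var (m + j) (pderiv_var j P) + var (m + j) * lapb m m (pderiv_var j P))"
  proof (intro sum.cong refl)
    fix j assume j: "j \<in> {..<m}"
    have "(\<Sum>k<m. pderiv_var (m + k) (pderiv_var (m + k) (var (m + j) * pderiv_var j P))) =
       (\<Sum>k<m. if k = j then 2 * pderiv_var (m + j) (pderiv_var j P) else 0) +
       var (m + j) * lapb m m (pderiv_var j P)"
      by (simp add: pderiv2_var_mult sum.distrib lapb_def sum_distrib_left cong: if_cong)
    then show "(\<Sum>k<m. pderiv_var (m + k) (pderiv_var (m + k) (var (m + j) * pderiv_var j P))) =
       2 * pderiv_var (m + j) (pderiv_var j P) + var (m + j) * lapb m m (pderiv_var j P)"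
      using j by (simp add: sum.delta)
  qed
  also have "\<dots> = u_dx m (lapb m m P) + 2 * du_dx m P"
    by (simp add: sum.distrib u_dx_def du_dx_def pderiv_lapb sum_distrib_left add.commute)
  finally show ?thesis .
qed


lemma lapb0_u_dx: "lapb m 0 (u_dx m P) = u_dx m (lapb m 0 P)"
proof -
  have "lapb m 0 (u_dx m P) = (\<Sum>j<m. \<Sum>k<m. pderiv_var k (pderiv_var k (var (m + j) * pderiv_var j P)))"
    unfolding lapb_def u_dx_def pderiv_sum by simp (rule sum.swap)
  also have "\<dots> = (\<Sum>j<m. var (m + j) * (\<Sum>k<m. pderiv_var k (pderiv_var k (pderiv_var j P))))"
    by (intro sum.cong refl) (simp add: pderiv2_var_mult sum_distrib_left)
  also have "\<dots> = u_dx m (lapb m 0 P)"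
    using pderiv_lapb[of _ m 0] by (simp add: u_dx_def lapb_def)
  finally show ?thesis .
qed

lemma lapbm_x_du: "lapb m m (x_du m P) = x_du m (lapb m m P)"
proof -
  have "lapb m m (x_du m P) = (\<Sum>j<m. \<Sum>k<m. pderiv_var (m + k) (pderiv_var (m + k) (var j * pderiv_var (m + j) P)))"
    unfolding lapb_def x_du_def pderiv_sum by (rule sum.swap)
  also have "\<dots> = (\<Sum>j<m. var j * (\<Sum>k<m. pderiv_var (m + k) (pderiv_var (m + k) (pderiv_var (m + j) P))))"
    by (intro sum.cong refl) (simp add: pderiv2_var_mult sum_distrib_left)
  also have "\<dots> = x_du m (lapb m m P)"
    using pderiv_lapb[of _ m m] by (simp add: x_du_def lapb_def)
  finally show ?thesis .
qed

lemma lapb0_x_du: "lapb m 0 (x_du m P) = x_du m (lapb m 0 P) + 2 * du_dx m P"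
proof -
  have "lapb m 0 (x_du m P) = (\<Sum>j<m. \<Sum>k<m. pderiv_var k (pderiv_var k (var j * pderiv_var (m + j) P)))"
    unfolding lapb_def x_du_def pderiv_sum by simp (rule sum.swap)
  also have "\<dots> = (\<Sum>j<m. 2 * pderiv_var j (pderiv_var (m + j) P) + var j * lapb m 0 (pderiv_var (m + j) P))"
  proof (intro sum.cong refl)
    fix j assume j: "j \<in> {..<m}"
    have "(\<Sum>k<m. pderiv_var k (pderiv_var k (var j * pderiv_var (m + j) P))) =
       (\<Sum>k<m. if k = j then 2 * pderiv_var j (pderiv_var (m + j) P) else 0) +
       var j * lapb m 0 (pderiv_var (m + j) P)"
      by (simp add: pderiv2_var_mult sum.distrib lapb_def sum_distrib_left cong: if_cong)
    then show "(\<Sum>k<m. pderiv_var k (pderiv_var k (var j * pderiv_var (m + j) P))) =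
       2 * pderiv_var j (pderiv_var (m + j) P) + var j * lapb m 0 (pderiv_var (m + j) P)"
      using j by (simp add: sum.delta)
  qed
  also have "\<dots> = x_du m (lapb m 0 P) + 2 * du_dx m P"
    by (simp add: sum.distrib x_du_def du_dx_def pderiv_lapb sum_distrib_left add.commute pderiv_comm)
  finally show ?thesis .
qed

lemma lapb_du_dx: "lapb m b (du_dx m P) = du_dx m (lapb m b P)"
  by (simp add: du_dx_def lapb_sum pderiv_lapb[symmetric])

lemma in_vars_u_dx: "in_vars m P \<Longrightarrow> in_vars m (u_dx m P)"
  unfolding u_dx_def by (auto intro!: in_vars_sum in_vars_var_mult in_vars_pderiv)
lemma in_vars_x_du: "in_vars m P \<Longrightarrow> in_vars m (x_du m P)"
  unfolding x_du_def by (auto intro!: in_vars_sum in_vars_var_mult in_vars_pderiv)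
lemma in_vars_du_dx: "in_vars m P \<Longrightarrow> in_vars m (du_dx m P)"
  unfolding du_dx_def by (auto intro!: in_vars_sum in_vars_pderiv)
lemma in_vars_ux: "in_vars m Y \<Longrightarrow> in_vars m (ux m * Y)"
  unfolding ux_mult by (auto intro!: in_vars_sum in_vars_var_mult)
lemma in_vars_two: "in_vars m Y \<Longrightarrow> in_vars m (2 * Y)"
  by (simp add: numeral_mult_scl in_vars_scl)

lemma two_scl2: "2 * X = scl2 m (\<lambda>p q. 2) X"
  by (simp add: numeral_mult_scl scl2_def)

lemma ux_scl2: "ux m * scl2 m (\<lambda>p q. F (p + 1) (q + 1)) Y = scl2 m F (ux m * Y)"
proof -
  have "\<And>j. j < m \<Longrightarrow> var (m + j) * (var j * scl2 m (\<lambda>p q. F (p + 1) (q + 1)) Y) = scl2 m F (var (m + j) * (var j * Y))"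
  proof -
    fix j assume j: "j < m"
    have "var j * scl2 m (\<lambda>p q. F (p + 1) (q + 1)) Y = scl2 m (\<lambda>p q. F p (q + 1)) (var j * Y)"
      using var_scl2_x[OF j, of "\<lambda>p q. F p (q + 1)" Y] by simp
    moreover have "var (m + j) * scl2 m (\<lambda>p q. F p (q + 1)) (var j * Y) = scl2 m F (var (m + j) * (var j * Y))"
      using var_scl2_u[OF j, of F "var j * Y"] by simp
    ultimately show "?thesis j" by simp
  qed
  then show ?thesis by (simp add: ux_mult sum_distrib_right scl2_sum)
qed


lemma fth_eq:
  assumes m: "0 < m"
  shows "2 * inverse (of_nat (m + 2 * p)) - 2 * inverse (of_nat (m + 2 * q)) =
    (eig_Hx m (p + 1) - eig_Hu m (q + 1)) / ((1 + eig_Hx m (p + 1)) * (1 + eig_Hu m (q + 1)))"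
proof -
  have a: "(of_nat (m + 2 * p) :: complex) \<noteq> 0" using m of_nat_eq_0_iff[where 'a=complex] by (metis add_is_0 not_gr_zero)
  have b: "(of_nat (m + 2 * q) :: complex) \<noteq> 0" using m of_nat_eq_0_iff[where 'a=complex] by (metis add_is_0 not_gr_zero)
  have c: "1 + eig_Hx m (p + 1) = - of_nat (m + 2 * p) / 2" by (simp add: eig_Hx_def field_simps)
  have d: "1 + eig_Hu m (q + 1) = - of_nat (m + 2 * q) / 2" by (simp add: eig_Hu_def field_simps)
  have e: "eig_Hx m (p + 1) - eig_Hu m (q + 1) = of_nat q - of_nat p" by (simp add: eig_Hx_def eig_Hu_def)
  show ?thesis unfolding c d e using a b by (simp add: field_simps)
qed

theorem lemma3p4:
  fixes m :: nat and P :: cpoly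
  assumes "m > 4" and "harm m P"
  shows "S_x m (S_u m P) - S_u m (S_x m P) =
    eig_apply m (\<lambda>p q. (eig_Hx m p - eig_Hu m q) / ((1 + eig_Hx m p) * (1 + eig_Hu m q)))
      (C_op m (A_op m P))
    - eig_apply m (\<lambda>p q. eig_Hx m p - eig_Hu m q) P"
proof -
  have m: "0 < m" using assms(1) by simp
  have ivP: "in_vars m P" and l0P: "lapb m 0 P = 0" and lmP: "lapb m m P = 0"
    using assms(2) by (simp_all add: harm_iff)
  have disj0: "\<forall>j<m. \<not> inb m 0 (m + j)" by simp
  have disjm: "\<forall>j<m. \<not> inb m m (0 + j)" by simp
  have bm0: "0 + m \<le> 2 * m" and bmm: "m + m \<le> 2 * m" by simp_all
  define D where "D = du_dx m P"
  have hD: "harm m D" unfolding D_def harm_iff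
    using ivP l0P lmP by (simp add: in_vars_du_dx lapb_du_dx, simp add: du_dx_def)
  define Ku where "Ku = scl2 m (\<lambda>p q. inverse (of_nat (m + 2 * q))) D"
  define Kx where "Kx = scl2 m (\<lambda>p q. inverse (of_nat (m + 2 * p))) D"
  have hKu: "harm m Ku" unfolding Ku_def by (rule harm_scl2[OF hD])
  have hKx: "harm m Kx" unfolding Kx_def by (rule harm_scl2[OF hD])
  have ivD: "in_vars m D" and l0D: "lapb m 0 D = 0" and lmD: "lapb m m D = 0" using hD by (simp_all add: harm_iff)
  have ivKu: "in_vars m Ku" and l0Ku: "lapb m 0 Ku = 0" and lmKu: "lapb m m Ku = 0" using hKu by (simp_all add: harm_iff)
  have ivKx: "in_vars m Kx" and l0Kx: "lapb m 0 Kx = 0" and lmKx: "lapb m m Kx = 0" using hKx by (simp_all add: harm_iff)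

  have twoD_u: "scl (\<lambda>\<beta>. of_nat (2 * m + 4 * degb m m \<beta>)) Ku = 2 * D"
  proof -
    have "scl (\<lambda>\<beta>. of_nat (2 * m + 4 * degb m m \<beta>)) Ku = scl2 m (\<lambda>p q. of_nat (2 * m + 4 * q) * inverse (of_nat (m + 2 * q))) D"
      unfolding Ku_def scl2_scl2[symmetric] by (simp add: scl2_def)
    also have "\<dots> = scl2 m (\<lambda>p q. 2) D"
    proof -
      have "\<And>q. (of_nat (2 * m + 4 * q) :: complex) * inverse (of_nat (m + 2 * q)) = 2"
      proof -
        fix q
        have "(of_nat (m + 2 * q) :: complex) \<noteq> 0" using m of_nat_eq_0_iff[where 'a=complex] by (metis add_is_0 not_gr_zero)
        moreover have "(of_nat (2 * m + 4 * q) :: complex) = 2 * of_nat (m + 2 * q)" by simp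
        ultimately show "(of_nat (2 * m + 4 * q) :: complex) * inverse (of_nat (m + 2 * q)) = 2"
          by (metis mult.assoc right_inverse mult_1_right)
      qed
      then show ?thesis by simp
    qed
    finally show ?thesis by (simp add: two_scl2[of D m])
  qed
  have twoD_x: "scl (\<lambda>\<beta>. of_nat (2 * m + 4 * degb m 0 \<beta>)) Kx = 2 * D"
  proof -
    have "scl (\<lambda>\<beta>. of_nat (2 * m + 4 * degb m 0 \<beta>)) Kx = scl2 m (\<lambda>p q. of_nat (2 * m + 4 * p) * inverse (of_nat (m + 2 * p))) D"
      unfolding Kx_def scl2_scl2[symmetric] by (simp add: scl2_def)
    also have "\<dots> = scl2 m (\<lambda>p q. 2) D"
    proof -
      have "\<And>p. (of_nat (2 * m + 4 * p) :: complex) * inverse (of_nat (m + 2 * p)) = 2"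
      proof -
        fix p
        have "(of_nat (m + 2 * p) :: complex) \<noteq> 0" using m of_nat_eq_0_iff[where 'a=complex] by (metis add_is_0 not_gr_zero)
        moreover have "(of_nat (2 * m + 4 * p) :: complex) = 2 * of_nat (m + 2 * p)" by simp
        ultimately show "(of_nat (2 * m + 4 * p) :: complex) * inverse (of_nat (m + 2 * p)) = 2"
          by (metis mult.assoc right_inverse mult_1_right)
      qed
      then show ?thesis by simp
    qed
    finally show ?thesis by (simp add: two_scl2[of D m])
  qed

  have Su: "S_u m P = u_dx m P - nsqb m m * Ku"
    unfolding S_u_def
  proof (rule pi_s_char[OF m, of _ _ 0 Ku])
    show "in_vars m (u_dx m P)" using ivP by (rule in_vars_u_dx)
    show "u_dx m P = u_dx m P - nsqb m m * Ku + normsq_x m * 0 + normsq_u m * Ku"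
      by (simp add: normsq_u_eq)
    show "harm m (u_dx m P - nsqb m m * Ku)"
      unfolding harm_iff
    proof (intro conjI)
      show "in_vars m (u_dx m P - nsqb m m * Ku)"
        using ivP ivKu bmm by (intro in_vars_diff in_vars_u_dx in_vars_nsqb)
      show "lapb m 0 (u_dx m P - nsqb m m * Ku) = 0"
        by (simp add: lapb_diff lapb0_u_dx l0P lapb_nsqb_other[OF disjm] l0Ku)
      show "lapb m m (u_dx m P - nsqb m m * Ku) = 0"
        by (simp only: lapb_diff lapbm_u_dx lmP u_dx_zero lapb_nsqb lmKu mult_zero_right add_0_left twoD_u D_def diff_self)
    qed
  qed
  have Sx: "S_x m P = x_du m P - nsqb m 0 * Kx"
    unfolding S_x_def
  proof (rule pi_s_char[OF m, of _ _ Kx 0])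
    show "in_vars m (x_du m P)" using ivP by (rule in_vars_x_du)
    show "x_du m P = x_du m P - nsqb m 0 * Kx + normsq_x m * Kx + normsq_u m * 0"
      by (simp add: normsq_x_eq)
    show "harm m (x_du m P - nsqb m 0 * Kx)"
      unfolding harm_iff
    proof (intro conjI)
      show "in_vars m (x_du m P - nsqb m 0 * Kx)"
        using ivP ivKx bm0 by (intro in_vars_diff in_vars_x_du in_vars_nsqb)
      show "lapb m m (x_du m P - nsqb m 0 * Kx) = 0"
        by (simp add: lapb_diff lapbm_x_du lmP lapb_nsqb_other[OF disj0] lmKx)
      show "lapb m 0 (x_du m P - nsqb m 0 * Kx) = 0"
        by (simp only: lapb_diff lapb0_x_du l0P x_du_zero lapb_nsqb l0Kx mult_zero_right add_0_left twoD_x D_def diff_self)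
    qed
  qed
  have ivSu: "in_vars m (S_u m P)" unfolding Su using ivP ivKu bmm by (intro in_vars_diff in_vars_u_dx in_vars_nsqb)
  have ivSx: "in_vars m (S_x m P)" unfolding Sx using ivP ivKx bm0 by (intro in_vars_diff in_vars_x_du in_vars_nsqb)
  have XS: "x_du m (S_u m P) = x_du m (u_dx m P) - (nsqb m m * x_du m Ku + 2 * (ux m * Ku))"
    by (simp only: Su x_du_diff x_du_nsqm)
  have US: "u_dx m (S_x m P) = u_dx m (x_du m P) - (nsqb m 0 * u_dx m Kx + 2 * (ux m * Kx))"
    by (simp only: Sx u_dx_diff u_dx_nsq0)
  define W where "W = 2 * Kx - 2 * Ku"
  define T1 where "T1 = scl2 m (\<lambda>p q. of_nat p - of_nat q) P"
  have diff: "x_du m (S_u m P) - u_dx m (S_x m P) = (T1 + nsqb m 0 * u_dx m Kx) - nsqb m m * x_du m Ku + ux m * W"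
  proof -
    have "x_du m (S_u m P) - u_dx m (S_x m P) = (x_du m (u_dx m P) - u_dx m (x_du m P)) + nsqb m 0 * u_dx m Kx - nsqb m m * x_du m Ku + ux m * (2 * Kx - 2 * Ku)"
      unfolding XS US by (simp add: algebra_simps)
    then show ?thesis unfolding comm_xu T1_def W_def .
  qed
  define fth where "fth p q = (eig_Hx m p - eig_Hu m q) / ((1 + eig_Hx m p) * (1 + eig_Hu m q))" for p q
  have W: "W = scl2 m (\<lambda>p q. fth (p + 1) (q + 1)) D"
  proof -
    have "W = scl2 m (\<lambda>p q. 2 * inverse (of_nat (m + 2 * p)) - 2 * inverse (of_nat (m + 2 * q))) D"
      unfolding W_def Kx_def Ku_def two_scl2[of _ m] scl2_scl2 scl2_diff_fun ..
    also have "(\<lambda>p q. 2 * inverse (of_nat (m + 2 * p)) - 2 * inverse (of_nat (m + 2 * q)) :: complex) = (\<lambda>p q. fth (p + 1) (q + 1))"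
      unfolding fth_def using fth_eq[OF m] by (intro ext) blast
    finally show ?thesis .
  qed
  have uxW: "ux m * W = scl2 m fth (ux m * D)" unfolding W by (rule ux_scl2)
  have AP: "A_op m P = D" unfolding A_op_def D_def[symmetric] by (rule pi_s_harm[OF m hD])
  have CA: "C_op m (A_op m P) = pi_s m (ux m * D)" by (simp add: C_op_def AP)
  have ivT1: "in_vars m T1" unfolding T1_def using ivP by (rule in_vars_scl2)
  have ivT2: "in_vars m (nsqb m 0 * u_dx m Kx)" using ivKx bm0 by (intro in_vars_nsqb in_vars_u_dx)
  have ivT3: "in_vars m (nsqb m m * x_du m Ku)" using ivKu bmm by (intro in_vars_nsqb in_vars_x_du)
  have ivuxD: "in_vars m (ux m * D)" using ivD by (rule in_vars_ux)
  have ivT4: "in_vars m (ux m * W)" unfolding uxW using ivuxD by (rule in_vars_scl2)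
  have "S_x m (S_u m P) - S_u m (S_x m P) = pi_s m (x_du m (S_u m P) - u_dx m (S_x m P))"
    unfolding S_x_def[of m "S_u m P"] S_u_def[of m "S_x m P"]
    using ivSu ivSx by (intro pi_s_diff[OF m, symmetric] in_vars_x_du in_vars_u_dx)
  also have "\<dots> = pi_s m T1 + pi_s m (nsqb m 0 * u_dx m Kx) - pi_s m (nsqb m m * x_du m Ku) + pi_s m (ux m * W)"
    unfolding diff
    using ivT1 ivT2 ivT3 ivT4
    by (simp add: pi_s_add[OF m] pi_s_diff[OF m] in_vars_add in_vars_diff)
  also have "\<dots> = T1 + scl2 m fth (C_op m (A_op m P))"
    unfolding CA uxW
    using ivKx ivKu ivuxD assms(2)
    by (simp add: pi_s_nsq0[OF m] pi_s_nsqm[OF m] in_vars_u_dx in_vars_x_du pi_s_scl2[OF m]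
        T1_def pi_s_harm[OF m] harm_scl2)
  also have "T1 = - scl2 m (\<lambda>p q. eig_Hx m p - eig_Hu m q) P"
  proof -
    have "T1 + scl2 m (\<lambda>p q. eig_Hx m p - eig_Hu m q) P = scl2 m (\<lambda>p q. 0) P"
      unfolding T1_def scl2_add_fun by (simp add: eig_Hx_def eig_Hu_def)
    also have "\<dots> = 0" by (rule poly_mapping_eqI) (simp add: scl2_def lookup_scl)
    finally show ?thesis by (simp add: eq_neg_iff_add_eq_0)
  qed
  finally show ?thesis unfolding eig_apply_scl2 fth_def by simp
qed


end
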